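(* Let $\mathcal{S}_1,\mathcal{S}_2\in\mathfrak{P}(X)$ with $\mathcal{S}_1\prec\mathcal{S}_2$. Then $$1\le|\mathcal{P}(\mathcal{S}_2)|-|\mathcal{H}(\mathcal{S}_2)|<|\mathcal{P}(\mathcal{S}_1)|-|\mathcal{H}(\mathcal{S}_1)|\le|X|.$$ Moreover, if $(|\mathcal{P}(\mathcal{S}_1)|-|\mathcal{H}(\mathcal{S}_1)|)-(|\mathcal{P}(\mathcal{S}_2)|-|\mathcal{H}(\mathcal{S}_2)|)\ge 2$, then there exists $\mathcal{S}_3\in\mathfrak{P}(X)$ with $\mathcal{S}_1\prec\mathcal{S}_3\prec\mathcal{S}_2$.
   Context: Let $X$ be a finite non-empty set. A set pair system on $X$ is a set of ordered pairs $(S,H)$ of subsets of $X$ with $S\ne\emptyset$ and $S\cap H=\emptyset$. On set pairs, $(S_1,H_1)\le(S_2,H_2)$ iff they are equal or one of: $S_1\cup H_1\subseteq S_2$; $S_1\cup H_1\subseteq H_2$; $S_1\subsetneq S_2$ and $H_1=H_2\ne\emptyset$. For set pair systems, $\mathcal{S}_1\preceq\mathcal{S}_2$ iff (SP1) for every $(S_1,H_1)\in\mathcal{S}_1$ there is $(S_2,H_2)\in\mathcal{S}_2$ with $(S_1,H_1)\le(S_2,H_2)$, and (SP2) for every $(S_2,H_2)\in\mathcal{S}_2$ with $H_2\ne\emptyset$, if some $(S_1,H_1)\in\mathcal{S}_1$ has $H_1=H_2$ then some such $(S_1,H_1)$ satisfies $(S_1,H_1)\le(S_2,H_2)$; $\mathcal{S}_1\prec\mathcal{S}_2$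 means $\mathcal{S}_1\preceq\mathcal{S}_2$ and $\mathcal{S}_1\ne\mathcal{S}_2$. A polestar system is a set pair system $\mathcal{S}$ with (PL1) $\mathcal{P}(\mathcal{S})=\{S:(S,H)\in\mathcal{S}\}$ is a partition of $X$; (PL2) distinct $(S,H),(S',H')\in\mathcal{S}$ have $S\ne S'$; (PL3) for each $(S,H)\in\mathcal{S}$ with $H\ne\emptyset$, $(H,\emptyset)\in\mathcal{S}$ and there is exactly one $(S',H')\in\mathcal{S}$ with $(S',H')\ne(S,H)$ and $H'=H$. Also $\mathcal{H}(\mathcal{S})=\{H:(S,H)\in\mathcal{S},H\ne\emptyset\}$, and $\mathfrak{P}(X)$ is the set of polestar systems on $X$. *)

theory Defs
  imports Main
begin

type_synonym 'a set_pair = "'a set \<times> 'a set"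

definition set_pair_system :: "'a set \<Rightarrow> 'a set_pair set \<Rightarrow> bool" where
  "set_pair_system X \<S> \<longleftrightarrow>
     (\<forall>(S, H) \<in> \<S>. S \<subseteq> X \<and> H \<subseteq> X \<and> S \<noteq> {} \<and> S \<inter> H = {})"

definition sp_le :: "'a set_pair \<Rightarrow> 'a set_pair \<Rightarrow> bool" where
  "sp_le p q \<longleftrightarrow> (case p of (S1, H1) \<Rightarrow> case q of (S2, H2) \<Rightarrow>
      p = q \<or> S1 \<union> H1 \<subseteq> S2 \<or> S1 \<union> H1 \<subseteq> H2 \<or> (S1 \<subset> S2 \<and> H1 = H2 \<and> H2 \<noteq> {}))"

definition sps_le :: "'a set_pair set \<Rightarrow> 'a set_pair set \<Rightarrow> bool" where
  "sps_le \<S>1 \<S>2 \<longleftrightarrow>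
     (\<forall>p1 \<in> \<S>1. \<exists>p2 \<in> \<S>2. sp_le p1 p2) \<and>
     (\<forall>(S2, H2) \<in> \<S>2. H2 \<noteq> {} \<longrightarrow>
        (\<exists>(S1, H1) \<in> \<S>1. H1 = H2) \<longrightarrow>
        (\<exists>(S1, H1) \<in> \<S>1. H1 = H2 \<and> sp_le (S1, H1) (S2, H2)))"

definition sps_less :: "'a set_pair set \<Rightarrow> 'a set_pair set \<Rightarrow> bool" where
  "sps_less \<S>1 \<S>2 \<longleftrightarrow> sps_le \<S>1 \<S>2 \<and> \<S>1 \<noteq> \<S>2"

definition parts :: "'a set_pair set \<Rightarrow> 'a set set" where
  "parts \<S> = {S. \<exists>H. (S, H) \<in> \<S>}"

definition hulls :: "'a set_pair set \<Rightarrow> 'a set set" where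
  "hulls \<S> = {H. \<exists>S. (S, H) \<in> \<S> \<and> H \<noteq> {}}"

definition is_partition :: "'a set \<Rightarrow> 'a set set \<Rightarrow> bool" where
  "is_partition X P \<longleftrightarrow> \<Union>P = X \<and> {} \<notin> P \<and>
     (\<forall>A \<in> P. \<forall>B \<in> P. A \<noteq> B \<longrightarrow> A \<inter> B = {})"

definition polestar_system :: "'a set \<Rightarrow> 'a set_pair set \<Rightarrow> bool" where
  "polestar_system X \<S> \<longleftrightarrow> set_pair_system X \<S> \<and>
     is_partition X (parts \<S>) \<and>
     (\<forall>(S, H) \<in> \<S>. \<forall>(S', H') \<in> \<S>. (S, H) \<noteq> (S', H') \<longrightarrow> S \<noteq> S') \<and>
     (\<forall>(S, H) \<in> \<S>. H \<noteq> {} \<longrightarrow>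
        (H, {}) \<in> \<S> \<and> (\<exists>!p \<in> \<S>. p \<noteq> (S, H) \<and> snd p = H))"

definition polestar_systems :: "'a set \<Rightarrow> 'a set_pair set set" where
  "polestar_systems X = {\<S>. polestar_system X \<S>}"

end

theory Submission
  imports Defs
begin


lemma ps_basic:
  assumes "polestar_system X S" "(A,H) \<in> S"
  shows "A \<subseteq> X" "H \<subseteq> X" "A \<noteq> {}" "A \<inter> H = {}"
  using assms unfolding polestar_system_def set_pair_system_def by auto

lemma ps_uniq: assumes "polestar_system X S" "(A,H) \<in> S" "(A,H') \<in> S" shows "H = H'"
proof -
  have h: "\<forall>(S1,H1)\<in>S. \<forall>(S2,H2)\<in>S. (S1,H1)\<noteq>(S2,H2) \<longrightarrow> S1\<noteq>S2"
    using assms(1) unfolding polestar_system_def by (elim conjE)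
  show ?thesis using bspec[OF h assms(2)] assms(3) by auto
qed

lemma ps_pl3: assumes "polestar_system X S" "(A,H) \<in> S" "H \<noteq> {}"
  shows "(H,{}) \<in> S \<and> (\<exists>!p. p \<in> S \<and> p \<noteq> (A,H) \<and> snd p = H)"
proof -
  have h: "\<forall>(S0, H0) \<in> S. H0 \<noteq> {} \<longrightarrow> (H0, {}) \<in> S \<and> (\<exists>!p \<in> S. p \<noteq> (S0, H0) \<and> snd p = H0)"
    using assms(1) unfolding polestar_system_def by (elim conjE)
  show ?thesis using bspec[OF h assms(2)] assms(3) by simp
qed

lemma ps_part: assumes "polestar_system X S" shows "is_partition X (parts S)"
  using assms unfolding polestar_system_def by (elim conjE)

lemma ps_disj: assumes "polestar_system X S" "(A,H) \<in> S" "(B,H') \<in> S" "A \<inter> B \<noteq> {}" shows "A = B"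
proof -
  have "A \<in> parts S" "B \<in> parts S" using assms unfolding parts_def by auto
  then show ?thesis using ps_part[OF assms(1)] assms(4) unfolding is_partition_def by blast
qed

lemma ps_cover: assumes "polestar_system X S" "x \<in> X" shows "\<exists>A H. (A,H) \<in> S \<and> x \<in> A"
proof -
  have "\<Union>(parts S) = X" using ps_part[OF assms(1)] unfolding is_partition_def by blast
  then show ?thesis using assms(2) unfolding parts_def by blast
qed

lemma ps_hull: assumes "polestar_system X S" "(A,H) \<in> S" "H \<noteq> {}" shows "(H,{}) \<in> S"
  using ps_pl3[OF assms] by blast

lemma ps_other: assumes "polestar_system X S" "(A,H) \<in> S" "H \<noteq> {}" shows "\<exists>B. (B,H) \<in> S \<and> B \<noteq> A"
proof -
  obtain p where "p \<in> S" "p \<noteq> (A,H)" "snd p = H" using ps_pl3[OF assms] by blast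
  then show ?thesis by (metis prod.collapse)
qed

lemma ps_third: assumes "polestar_system X S" "(A,H) \<in> S" "(B,H) \<in> S" "(C,H) \<in> S" "H \<noteq> {}" "A \<noteq> B"
  shows "C = A \<or> C = B"
proof -
  have "\<exists>!p. p \<in> S \<and> p \<noteq> (A,H) \<and> snd p = H" using ps_pl3[OF assms(1,2,5)] by blast
  then have "\<And>p q. p \<in> S \<and> p \<noteq> (A,H) \<and> snd p = H \<Longrightarrow> q \<in> S \<and> q \<noteq> (A,H) \<and> snd q = H \<Longrightarrow> p = q"
    by blast
  from this[of "(B,H)" "(C,H)"] show ?thesis using assms by auto
qed

lemma ps_memb: assumes "polestar_system X S" "(A,H) \<in> S" "H \<noteq> {}" shows "A \<notin> hulls S"
proof
  assume "A \<in> hulls S"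
  then obtain B where "(B,A) \<in> S" "A \<noteq> {}" unfolding hulls_def by auto
  then have "(A,{}) \<in> S" using ps_hull assms by blast
  then show False using ps_uniq assms by blast
qed



lemma polestarI:
  assumes a: "\<And>A H. (A,H) \<in> S \<Longrightarrow> A \<noteq> {} \<and> A \<inter> H = {}"
    and b: "\<Union>(parts S) = X"
    and c: "\<And>A H B H'. (A,H) \<in> S \<Longrightarrow> (B,H') \<in> S \<Longrightarrow> A \<inter> B \<noteq> {} \<Longrightarrow> A = B \<and> H = H'"
    and d: "\<And>A H. (A,H) \<in> S \<Longrightarrow> H \<noteq> {} \<Longrightarrow> (H,{}) \<in> S \<and> (\<exists>B. B \<noteq> A \<and> (B,H) \<in> S)
              \<and> (\<forall>B C. (B,H) \<in> S \<longrightarrow> (C,H) \<in> S \<longrightarrow> B = A \<or> C = A \<or> B = C)"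
  shows "polestar_system X S"
  unfolding polestar_system_def
proof (intro conjI)
  have pX: "(A,H) \<in> S \<Longrightarrow> A \<subseteq> X" for A H using b unfolding parts_def by blast
  show "set_pair_system X S" unfolding set_pair_system_def
  proof (clarify)
    fix A H assume AH: "(A,H) \<in> S"
    have "H \<subseteq> X" proof (cases "H = {}")
      case False then have "(H,{}) \<in> S" using d[OF AH] by blast
      then show ?thesis using pX by blast
    qed simp
    then show "A \<subseteq> X \<and> H \<subseteq> X \<and> A \<noteq> {} \<and> A \<inter> H = {}" using a[OF AH] pX[OF AH] by blast
  qed
  show "is_partition X (parts S)" unfolding is_partition_def
  proof (intro conjI ballI impI)
    show "\<Union> (parts S) = X" by fact
    show "{} \<notin> parts S" using a unfolding parts_def by blast
    fix A B assume "A \<in> parts S" "B \<in> parts S" "A \<noteq> B"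
    then show "A \<inter> B = {}" using c unfolding parts_def by blast
  qed
  have u: "(A,H) \<in> S \<Longrightarrow> (A,H') \<in> S \<Longrightarrow> H = H'" for A H H'
    using c a by (metis Int_absorb)
  show "\<forall>(A, H)\<in>S. \<forall>(S', H')\<in>S. (A, H) \<noteq> (S', H') \<longrightarrow> A \<noteq> S'"
    using u by fast
  show "\<forall>(A, H)\<in>S. H \<noteq> {} \<longrightarrow> (H, {}) \<in> S \<and> (\<exists>!p. p \<in> S \<and> p \<noteq> (A, H) \<and> snd p = H)"
  proof (clarify)
    fix A H assume h: "(A,H) \<in> S" "H \<noteq> {}"
    from d[OF h] obtain B where B: "B \<noteq> A" "(B,H) \<in> S" "(H,{}) \<in> S" by blast
    show "(H, {}) \<in> S \<and> (\<exists>!p. p \<in> S \<and> p \<noteq> (A, H) \<and> snd p = H)"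
    proof (rule conjI)
      show "(H,{}) \<in> S" by fact
      show "\<exists>!p. p \<in> S \<and> p \<noteq> (A, H) \<and> snd p = H"
      proof (rule ex1I[of _ "(B,H)"])
      show "(B,H) \<in> S \<and> (B,H) \<noteq> (A,H) \<and> snd (B,H) = H" using B by simp
      fix p assume p: "p \<in> S \<and> p \<noteq> (A, H) \<and> snd p = H"
      then obtain C where C: "p = (C,H)" by (metis prod.collapse)
      have q: "\<forall>B C. (B,H) \<in> S \<longrightarrow> (C,H) \<in> S \<longrightarrow> B = A \<or> C = A \<or> B = C" using d[OF h] by (elim conjE)
      have pC: "(C,H) \<in> S" using p C by simp
      have "B = A \<or> C = A \<or> B = C" using q[rule_format, OF B(2) pC] .
      then show "p = (B,H)" using p B C by auto
    qed
    qed
  qed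
qed



lemma sp_le_simp: "sp_le (A,H) (B,K) \<longleftrightarrow> (A,H)=(B,K) \<or> A\<union>H \<subseteq> B \<or> A\<union>H \<subseteq> K \<or> (A \<subset> B \<and> H = K \<and> K \<noteq> {})"
  by (simp add: sp_le_def)

definition C1 where "C1 S1 S2 \<longleftrightarrow> (\<exists>F F' P Q. (F,{}) \<in> S1 \<and> (F',{}) \<in> S1 \<and> F \<noteq> F' \<and> F \<notin> hulls S1 \<and> F' \<notin> hulls S1 \<and> (P,Q) \<in> S2 \<and> F \<union> F' \<subseteq> P)"
definition C2 where "C2 S1 S2 \<longleftrightarrow> (\<exists>Ta Tb H P Q. (Ta,H) \<in> S1 \<and> (Tb,H) \<in> S1 \<and> Ta \<noteq> Tb \<and> H \<noteq> {} \<and> (P,Q) \<in> S2 \<and> Ta \<union> Tb \<union> H \<subseteq> P)"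
definition C3 where "C3 S1 S2 \<longleftrightarrow> (\<exists>Fa Fb K. (Fa,{}) \<in> S1 \<and> (Fb,{}) \<in> S1 \<and> (K,{}) \<in> S1 \<and> Fa \<notin> hulls S1 \<and> Fb \<notin> hulls S1 \<and> K \<notin> hulls S1 \<and> Fa \<noteq> Fb \<and> (Fa,K) \<in> S2 \<and> (Fb,K) \<in> S2)"
definition C4 where "C4 S1 S2 \<longleftrightarrow> (\<exists>T H F B. (T,H) \<in> S1 \<and> H \<noteq> {} \<and> (F,{}) \<in> S1 \<and> F \<notin> hulls S1 \<and> (B,H) \<in> S2 \<and> T \<union> F \<subseteq> B)"

locale two =
  fixes X :: "'a set" and S1 S2 :: "'a set_pair set"
  assumes p1: "polestar_system X S1" and p2: "polestar_system X S2" and le: "sps_le S1 S2"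
begin

lemma SP1: assumes "(A,H) \<in> S1" shows "\<exists>B K. (B,K) \<in> S2 \<and> sp_le (A,H) (B,K)"
proof -
  have "\<forall>p1 \<in> S1. \<exists>p2 \<in> S2. sp_le p1 p2" using le unfolding sps_le_def by (elim conjE)
  then obtain p2 where "p2 \<in> S2" "sp_le (A,H) p2" using assms by blast
  then show ?thesis by (metis prod.collapse)
qed

lemma SP2: assumes "(B,K) \<in> S2" "K \<noteq> {}" "K \<in> hulls S1" shows "\<exists>A. (A,K) \<in> S1 \<and> A \<subseteq> B"
proof -
  have h: "\<forall>(S2', H2)\<in>S2. H2 \<noteq> {} \<longrightarrow> (\<exists>(S1', H1)\<in>S1. H1 = H2) \<longrightarrow>
        (\<exists>(S1', H1)\<in>S1. H1 = H2 \<and> sp_le (S1', H1) (S2', H2))" using le unfolding sps_le_def by (elim conjE)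
  have "\<exists>(S1', H1)\<in>S1. H1 = K" using assms(3) unfolding hulls_def by blast
  then have "\<exists>(S1', H1)\<in>S1. H1 = K \<and> sp_le (S1', H1) (B, K)" using bspec[OF h assms(1)] assms(2) by simp
  then obtain A where A: "(A,K) \<in> S1" "sp_le (A,K) (B,K)" by blast
  have "A \<noteq> {}" "A \<inter> K = {}" using ps_basic[OF p1 A(1)] by auto
  moreover have "B \<inter> K = {}" using ps_basic[OF p2 assms(1)] by auto
  ultimately have "A \<subseteq> B" using A(2) assms(2) unfolding sp_le_simp by blast
  then show ?thesis using A by blast
qed

lemma R: assumes "(A,H) \<in> S1" shows "\<exists>B K. (B,K) \<in> S2 \<and> A \<subseteq> B"
proof -
  obtain B K where BK: "(B,K) \<in> S2" "sp_le (A,H) (B,K)" using SP1[OF assms] by blast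
  have "A \<noteq> {}" using ps_basic[OF p1 assms] by auto
  show ?thesis
  proof (cases "A \<union> H \<subseteq> K")
    case True
    then have "K \<noteq> {}" using \<open>A \<noteq> {}\<close> by blast
    then have "(K,{}) \<in> S2" using ps_hull[OF p2 BK(1)] by blast
    then show ?thesis using True by blast
  next
    case False
    then have "A \<subseteq> B" using BK(2) unfolding sp_le_simp by blast
    then show ?thesis using BK by blast
  qed
qed

lemma MEM: assumes "(T,H) \<in> S1" "H \<noteq> {}"
  shows "(\<exists>P Q. (P,Q) \<in> S2 \<and> T \<union> H \<subseteq> P) \<or> (\<exists>S'. (S',H) \<in> S2 \<and> T \<subseteq> S')"
proof -
  obtain B K where BK: "(B,K) \<in> S2" "sp_le (T,H) (B,K)" using SP1[OF assms(1)] by blast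
  show ?thesis
  proof (cases "T \<union> H \<subseteq> K")
    case True
    then have "K \<noteq> {}" using assms(2) by blast
    then have "(K,{}) \<in> S2" using ps_hull[OF p2 BK(1)] by blast
    then show ?thesis using True by blast
  next
    case False
    then have "(T,H) = (B,K) \<or> T \<union> H \<subseteq> B \<or> (T \<subset> B \<and> H = K)" using BK(2) unfolding sp_le_simp by blast
    then show ?thesis using BK(1) by blast
  qed
qed

end


context two begin

lemma hullS2_of: assumes "(T,H) \<in> S1" "H \<noteq> {}" "\<exists>S'. (S',H) \<in> S2 \<and> T \<subseteq> S'" shows "(H,{}) \<in> S2"
  using assms ps_hull[OF p2] by blast

context
  assumes n1: "\<not> C1 S1 S2" and n2: "\<not> C2 S1 S2" and n3: "\<not> C3 S1 S2" and n4: "\<not> C4 S1 S2"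
begin

lemma pin: assumes TH: "(T,H) \<in> S1" and Hn: "H \<noteq> {}" shows "\<exists>S'. (S',H) \<in> S2 \<and> T \<subseteq> S'"
proof (rule ccontr)
  assume np: "\<not> (\<exists>S'. (S',H) \<in> S2 \<and> T \<subseteq> S')"
  then obtain P Q where PQ: "(P,Q) \<in> S2" "T \<union> H \<subseteq> P" using MEM[OF TH Hn] by blast
  obtain Tb where Tb: "(Tb,H) \<in> S1" "Tb \<noteq> T" using ps_other[OF p1 TH Hn] by blast
  have T: "T \<noteq> {}" "T \<inter> H = {}" using ps_basic[OF p1 TH] by auto
  show False
  proof (cases "\<exists>S'. (S',H) \<in> S2 \<and> Tb \<subseteq> S'")
    case True
    then have "(H,{}) \<in> S2" using hullS2_of[OF Tb(1) Hn] by blast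
    moreover have "P \<inter> H \<noteq> {}" using PQ Hn by blast
    ultimately have "P = H" using ps_disj[OF p2 PQ(1)] by blast
    then show False using PQ T by blast
  next
    case False
    then obtain P' Q' where P'Q': "(P',Q') \<in> S2" "Tb \<union> H \<subseteq> P'" using MEM[OF Tb(1) Hn] by blast
    have "P \<inter> P' \<noteq> {}" using PQ P'Q' Hn by blast
    then have "P' = P" using ps_disj[OF p2 PQ(1) P'Q'(1)] by blast
    then have "C2 S1 S2" unfolding C2_def using TH Tb Hn PQ P'Q' by blast
    then show False using n2 by blast
  qed
qed

lemma hullS2: assumes "(T,H) \<in> S1" "H \<noteq> {}" shows "(H,{}) \<in> S2"
  using hullS2_of[OF assms pin[OF assms]] .

lemma pin2: assumes TH: "(T,H) \<in> S1" and Hn: "H \<noteq> {}" and BK: "(B,K) \<in> S2" and i: "T \<inter> B \<noteq> {}"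
  shows "K = H \<and> T \<subseteq> B"
proof -
  obtain S' where S': "(S',H) \<in> S2" "T \<subseteq> S'" using pin[OF TH Hn] by blast
  have "S' \<inter> B \<noteq> {}" using S' i by blast
  then have "S' = B" using ps_disj[OF p2 S'(1) BK] by blast
  then show ?thesis using ps_uniq[OF p2 BK] S' by blast
qed

lemma hull_eq: assumes TH: "(T,H) \<in> S1" and Hn: "H \<noteq> {}" and BK: "(B,K) \<in> S2" and i: "H \<inter> B \<noteq> {}"
  shows "B = H"
  using ps_disj[OF p2 hullS2[OF TH Hn] BK] i by blast

lemma in_part: assumes "x \<in> X" "(B,K) \<in> S2" "x \<in> B"
  shows "\<exists>A h. (A,h) \<in> S1 \<and> x \<in> A \<and> A \<subseteq> B"
proof -
  obtain A h where Ah: "(A,h) \<in> S1" "x \<in> A" using ps_cover[OF p1 assms(1)] by blast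
  obtain B' K' where B': "(B',K') \<in> S2" "A \<subseteq> B'" using R[OF Ah(1)] by blast
  have "B' = B" using ps_disj[OF p2 B'(1) assms(2)] B'(2) Ah(2) assms(3) by blast
  then show ?thesis using Ah B' by blast
qed

lemma not_hull_part: assumes Ah: "(A,h) \<in> S1" and BK: "(B,K) \<in> S2" and sub: "A \<subseteq> B" and ne: "A \<noteq> B"
  shows "A \<notin> hulls S1"
proof
  assume "A \<in> hulls S1"
  then obtain T where T: "(T,A) \<in> S1" "A \<noteq> {}" unfolding hulls_def by blast
  have "A \<inter> B \<noteq> {}" using sub T(2) by blast
  then show False using hull_eq[OF T BK] ne by blast
qed

lemma step_d: assumes BK: "(B,K) \<in> S2" shows "\<exists>h. (B,h) \<in> S1"
proof -
  have B: "B \<noteq> {}" "B \<subseteq> X" using ps_basic[OF p2 BK] by auto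
  then obtain x where x: "x \<in> B" by blast
  obtain A h where Ah: "(A,h) \<in> S1" "x \<in> A" "A \<subseteq> B" using in_part[OF _ BK x] B x by blast
  have "A = B"
  proof (rule ccontr)
    assume ne: "A \<noteq> B"
    then obtain y where y: "y \<in> B" "y \<notin> A" using Ah(3) by blast
    obtain A' h' where A'h': "(A',h') \<in> S1" "y \<in> A'" "A' \<subseteq> B" using in_part[OF _ BK y(1)] B y by blast
    have ne': "A' \<noteq> B" using A'h' ps_disj[OF p1 Ah(1) A'h'(1)] y Ah by blast
    have AA': "A \<noteq> A'" using y A'h' by blast
    have nh: "A \<notin> hulls S1" "A' \<notin> hulls S1"
      using not_hull_part[OF Ah(1) BK Ah(3) ne] not_hull_part[OF A'h'(1) BK A'h'(3) ne'] by auto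
    have Kh: "h \<noteq> {} \<Longrightarrow> K = h" using pin2[OF Ah(1) _ BK] Ah(2,3) by blast
    have Kh': "h' \<noteq> {} \<Longrightarrow> K = h'" using pin2[OF A'h'(1) _ BK] A'h'(2,3) by blast
    show False
    proof (cases "h = {}")
      case hE: True
      show False
      proof (cases "h' = {}")
        case True
        then have "C1 S1 S2" unfolding C1_def using Ah A'h' hE AA' nh BK by blast
        then show False using n1 by blast
      next
        case False
        then have "C4 S1 S2" unfolding C4_def using Ah A'h' hE nh BK Kh' by blast
        then show False using n4 by blast
      qed
    next
      case hN: False
      show False
      proof (cases "h' = {}")
        case True
        then have "C4 S1 S2" unfolding C4_def using Ah A'h' hN nh BK Kh by blast
        then show False using n4 by blast
      next
        case False
        have "h' = h" using Kh Kh' False hN by blast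
        have Kn: "K \<noteq> {}" using Kh hN by blast
        have Khull: "K \<in> hulls S1" using Ah(1) Kh hN unfolding hulls_def by blast
        obtain B2 where B2: "(B2,K) \<in> S2" "B2 \<noteq> B" using ps_other[OF p2 BK Kn] by blast
        obtain A'' where A'': "(A'',K) \<in> S1" "A'' \<subseteq> B2" using SP2[OF B2(1) Kn Khull] by blast
        have "(A,K) \<in> S1" "(A',K) \<in> S1" using Ah(1) A'h'(1) Kh hN \<open>h' = h\<close> by auto
        then have "A'' = A \<or> A'' = A'" using ps_third[OF p1 _ _ A''(1) Kn AA'] by blast
        moreover have "A'' \<noteq> {}" using ps_basic[OF p1 A''(1)] by blast
        moreover have "B \<inter> B2 = {}" using ps_disj[OF p2 BK B2(1)] B2(2) by blast
        ultimately show False using A''(2) Ah(3) A'h'(3) by blast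
      qed
    qed
  qed
  then show ?thesis using Ah by blast
qed

lemma step_e: assumes BK: "(B,K) \<in> S2" shows "(B,K) \<in> S1"
proof -
  obtain h where Bh: "(B,h) \<in> S1" using step_d[OF BK] by blast
  have Bn: "B \<noteq> {}" using ps_basic[OF p2 BK] by blast
  show ?thesis
  proof (cases "h = {}")
    case False
    then show ?thesis using pin2[OF Bh False BK] Bn Bh by blast
  next
    case hE: True
    have "K = {}"
    proof (rule ccontr)
      assume Kn: "K \<noteq> {}"
      show False
      proof (cases "K \<in> hulls S1")
        case True
        obtain A where A: "(A,K) \<in> S1" "A \<subseteq> B" using SP2[OF BK Kn True] by blast
        have "A \<noteq> {}" using ps_basic[OF p1 A(1)] by blast
        then have "A = B" using ps_disj[OF p1 A(1) Bh] A(2) by blast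
        then show False using ps_uniq[OF p1 A(1)] Bh hE Kn by blast
      next
        case Knh: False
        obtain B2 where B2: "(B2,K) \<in> S2" "B2 \<noteq> B" using ps_other[OF p2 BK Kn] by blast
        obtain h2 where B2h: "(B2,h2) \<in> S1" using step_d[OF B2(1)] by blast
        have B2n: "B2 \<noteq> {}" using ps_basic[OF p2 B2(1)] by blast
        have h2E: "h2 = {}"
        proof (rule ccontr)
          assume "h2 \<noteq> {}"
          then have "K = h2" using pin2[OF B2h _ B2(1)] B2n by blast
          then show False using Knh B2h Kn unfolding hulls_def by blast
        qed
        have K2: "(K,{}) \<in> S2" using ps_hull[OF p2 BK Kn] .
        obtain k where Kk: "(K,k) \<in> S1" using step_d[OF K2] by blast
        have kE: "k = {}"
        proof (rule ccontr)
          assume "k \<noteq> {}"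
          then have "{} = k" using pin2[OF Kk _ K2] Kn by blast
          then show False using \<open>k \<noteq> {}\<close> by blast
        qed
        have Bnh: "B \<notin> hulls S1"
        proof
          assume "B \<in> hulls S1"
          then obtain T where "(T,B) \<in> S1" unfolding hulls_def by blast
          then have "(B,{}) \<in> S2" using hullS2 Bn by blast
          then show False using ps_uniq[OF p2 BK] Kn by blast
        qed
        have B2nh: "B2 \<notin> hulls S1"
        proof
          assume "B2 \<in> hulls S1"
          then obtain T where "(T,B2) \<in> S1" unfolding hulls_def by blast
          then have "(B2,{}) \<in> S2" using hullS2 B2n by blast
          then show False using ps_uniq[OF p2 B2(1)] Kn by blast
        qed
        have "C3 S1 S2" unfolding C3_def
          using Bh hE B2h h2E Kk kE Bnh B2nh Knh B2 BK by blast
        then show False using n3 by blast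
      qed
    qed
    then show ?thesis using Bh hE by simp
  qed
qed

lemma struct_eq: "S1 = S2"
proof
  show "S2 \<subseteq> S1" using step_e by auto
  show "S1 \<subseteq> S2"
  proof
    fix p assume "p \<in> S1"
    then obtain A h where p: "p = (A,h)" "(A,h) \<in> S1" by (metis prod.collapse)
    obtain B K where BK: "(B,K) \<in> S2" "A \<subseteq> B" using R[OF p(2)] by blast
    have BK1: "(B,K) \<in> S1" using step_e[OF BK(1)] .
    have "A \<noteq> {}" using ps_basic[OF p1 p(2)] by blast
    then have "A = B" using ps_disj[OF p1 p(2) BK1] BK(2) by blast
    then have "K = h" using ps_uniq[OF p1 BK1] p(2) by blast
    then show "p \<in> S2" using p BK \<open>A = B\<close> by simp
  qed
qed

end

lemma cases4: assumes "S1 \<noteq> S2" shows "C1 S1 S2 \<or> C2 S1 S2 \<or> C3 S1 S2 \<or> C4 S1 S2"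
  using struct_eq assms by blast

end


definition nh :: "'a set_pair set \<Rightarrow> 'a set set" where "nh S = parts S - hulls S"

lemma parts_iff: "A \<in> parts S \<longleftrightarrow> (\<exists>H. (A,H) \<in> S)" unfolding parts_def by simp
lemma hulls_iff: "H \<in> hulls S \<longleftrightarrow> (\<exists>A. (A,H) \<in> S) \<and> H \<noteq> {}" unfolding hulls_def by blast

lemma nh_iff: "A \<in> nh S \<longleftrightarrow> (\<exists>H. (A,H) \<in> S) \<and> A \<notin> hulls S" unfolding nh_def parts_def by blast

lemma parts_fin: assumes "polestar_system X S" "finite X" shows "finite (parts S)"
proof -
  have "parts S \<subseteq> Pow X" using ps_basic[OF assms(1)] unfolding parts_def by blast
  then show ?thesis using assms(2) finite_subset by blast
qed

lemma hulls_sub: assumes "polestar_system X S" shows "hulls S \<subseteq> parts S"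
  using ps_hull[OF assms] unfolding hulls_def parts_def by blast

lemma rank_eq: assumes "polestar_system X S" "finite X"
  shows "int (card (parts S)) - int (card (hulls S)) = int (card (nh S))"
proof -
  have f: "finite (parts S)" using parts_fin[OF assms] .
  have s: "hulls S \<subseteq> parts S" using hulls_sub[OF assms(1)] .
  have "card (nh S) = card (parts S) - card (hulls S)" unfolding nh_def using card_Diff_subset[OF finite_subset[OF s f] s] .
  moreover have "card (hulls S) \<le> card (parts S)" using card_mono[OF f s] .
  ultimately show ?thesis by simp
qed

lemma nh_fin: assumes "polestar_system X S" "finite X" shows "finite (nh S)"
  using parts_fin[OF assms] unfolding nh_def by blast

lemma parts_card: assumes "polestar_system X S" "finite X" shows "card (parts S) \<le> card X"
proof -
  define g where "g A = (SOME x. x \<in> A)" for A :: "'a set"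
  have gA: "A \<in> parts S \<Longrightarrow> g A \<in> A" for A
  proof -
    assume "A \<in> parts S"
    then obtain H where "(A,H) \<in> S" unfolding parts_iff by blast
    then have "A \<noteq> {}" using ps_basic(3)[OF assms(1)] by blast
    then have "\<exists>x. x \<in> A" by blast
    then show "g A \<in> A" unfolding g_def by (rule someI_ex)
  qed
  have inj: "inj_on g (parts S)"
  proof (rule inj_onI)
    fix A B assume AB: "A \<in> parts S" "B \<in> parts S" "g A = g B"
    then obtain H H' where "(A,H) \<in> S" "(B,H') \<in> S" unfolding parts_iff by blast
    moreover have "A \<inter> B \<noteq> {}" using gA AB by (metis disjoint_iff)
    ultimately show "A = B" using ps_disj[OF assms(1)] by blast
  qed
  have sub: "g ` parts S \<subseteq> X"
  proof
    fix y assume "y \<in> g ` parts S"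
    then obtain A where A: "A \<in> parts S" "y = g A" by blast
    then obtain H where "(A,H) \<in> S" unfolding parts_iff by blast
    then show "y \<in> X" using gA[OF A(1)] A(2) ps_basic(1)[OF assms(1)] by blast
  qed
  show ?thesis using card_inj_on_le[OF inj sub assms(2)] .
qed

lemma nh_le_X: assumes "polestar_system X S" "finite X" shows "card (nh S) \<le> card X"
proof -
  have "card (nh S) \<le> card (parts S)" unfolding nh_def using parts_fin[OF assms] by (simp add: card_mono)
  then show ?thesis using parts_card[OF assms] by linarith
qed

lemma nh_pos: assumes "polestar_system X S" "finite X" "X \<noteq> {}" shows "1 \<le> card (nh S)"
proof -
  obtain x where "x \<in> X" using assms(3) by blast
  then obtain A H where AH: "(A,H) \<in> S" using ps_cover[OF assms(1)] by blast
  have "nh S \<noteq> {}"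
  proof (cases "A \<in> hulls S")
    case False then have "A \<in> nh S" using AH unfolding nh_iff by blast
    then show ?thesis by blast
  next
    case True
    then obtain T where T: "(T,A) \<in> S" "A \<noteq> {}" unfolding hulls_iff by blast
    then have "T \<notin> hulls S" using ps_memb[OF assms(1)] by blast
    then have "T \<in> nh S" using T unfolding nh_iff by blast
    then show ?thesis by blast
  qed
  then have "card (nh S) > 0" using nh_fin[OF assms(1,2)] card_gt_0_iff by blast
  then show ?thesis by linarith
qed

context two begin

lemma in_part0: assumes "x \<in> X" "(B,K) \<in> S2" "x \<in> B"
  shows "\<exists>A h. (A,h) \<in> S1 \<and> x \<in> A \<and> A \<subseteq> B"
proof -
  obtain A h where Ah: "(A,h) \<in> S1" "x \<in> A" using ps_cover[OF p1 assms(1)] by blast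
  obtain B' K' where B': "(B',K') \<in> S2" "A \<subseteq> B'" using R[OF Ah(1)] by blast
  have "B' = B" using ps_disj[OF p2 B'(1) assms(2)] B'(2) Ah(2) assms(3) by blast
  then show ?thesis using Ah B' by blast
qed

lemma E: assumes "B \<in> nh S2" shows "\<exists>T \<in> nh S1. T \<subseteq> B"
proof -
  obtain K where BK: "(B,K) \<in> S2" using assms unfolding nh_iff by blast
  have Bnh: "B \<notin> hulls S2" using assms unfolding nh_iff by blast
  have B: "B \<noteq> {}" "B \<subseteq> X" using ps_basic[OF p2 BK] by auto
  then obtain x where x: "x \<in> B" by blast
  obtain A h where Ah: "(A,h) \<in> S1" "x \<in> A" "A \<subseteq> B" using in_part0[OF _ BK x] B x by blast
  show ?thesis
  proof (cases "A \<in> hulls S1")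
    case False then have "A \<in> nh S1" using Ah unfolding nh_iff by blast
    then show ?thesis using Ah by blast
  next
    case True
    then obtain T where T: "(T,A) \<in> S1" "A \<noteq> {}" unfolding hulls_iff by blast
    have Tnh: "T \<in> nh S1" using ps_memb[OF p1 T] T(1) unfolding nh_iff by blast
    have AB: "A \<inter> B \<noteq> {}" using Ah by blast
    obtain B' K' where BK': "(B',K') \<in> S2" "sp_le (T,A) (B',K')" using SP1[OF T(1)] by blast
    have "T \<subseteq> B"
    proof (cases "T \<union> A \<subseteq> B'")
      case True
      then have "B' = B" using ps_disj[OF p2 BK'(1) BK] AB by blast
      then show ?thesis using True by blast
    next
      case c2: False
      show ?thesis
      proof (cases "T \<union> A \<subseteq> K'")
        case True
        then have "K' \<noteq> {}" using T(2) by blast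
        then have "(K',{}) \<in> S2" using ps_hull[OF p2 BK'(1)] by blast
        then have "K' = B" using ps_disj[OF p2 _ BK] True AB by blast
        then have "B \<in> hulls S2" using BK'(1) \<open>K' \<noteq> {}\<close> unfolding hulls_iff by blast
        then show ?thesis using Bnh by blast
      next
        case False
        then have "(T,A) = (B',K') \<or> (T \<subset> B' \<and> A = K')" using c2 BK'(2) unfolding sp_le_simp by blast
        then have "(B',A) \<in> S2" using BK'(1) by auto
        then have "(A,{}) \<in> S2" using ps_hull[OF p2] T(2) by blast
        then have "A = B" using ps_disj[OF p2 _ BK] AB by blast
        then have "B \<in> hulls S2" using \<open>(B',A) \<in> S2\<close> T(2) unfolding hulls_iff by blast
        then show ?thesis using Bnh by blast
      qed
    qed
    then show ?thesis using Tnh by blast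
  qed
qed

lemma inj_card: assumes fX: "finite X" and T0: "T0 \<in> nh S1" and h: "\<And>B. B \<in> nh S2 \<Longrightarrow> \<exists>T \<in> nh S1 - {T0}. T \<subseteq> B"
  shows "card (nh S2) < card (nh S1)"
proof -
  define g where "g B = (SOME T. T \<in> nh S1 - {T0} \<and> T \<subseteq> B)" for B
  have g: "B \<in> nh S2 \<Longrightarrow> g B \<in> nh S1 - {T0} \<and> g B \<subseteq> B" for B
    unfolding g_def using h[of B] by (metis (no_types, lifting) someI_ex)
  have inj: "inj_on g (nh S2)"
  proof (rule inj_onI)
    fix A B assume AB: "A \<in> nh S2" "B \<in> nh S2" "g A = g B"
    obtain H H' where "(A,H) \<in> S2" "(B,H') \<in> S2" using AB unfolding nh_iff by blast
    moreover have "g A \<in> nh S1" using g[OF AB(1)] by blast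
    then obtain HH where "(g A, HH) \<in> S1" unfolding nh_iff by blast
    then have "g A \<noteq> {}" using ps_basic(3)[OF p1] by blast
    then have "A \<inter> B \<noteq> {}" using g[OF AB(1)] g[OF AB(2)] AB(3) by blast
    ultimately show "A = B" using ps_disj[OF p2] by blast
  qed
  have sub: "g ` nh S2 \<subseteq> nh S1 - {T0}" using g by blast
  have fin: "finite (nh S1)" using nh_fin[OF p1 fX] .
  have "card (nh S2) \<le> card (nh S1 - {T0})" using card_inj_on_le[OF inj sub] fin by simp
  moreover have "card (nh S1 - {T0}) = card (nh S1) - 1" using T0 fin by simp
  moreover have "card (nh S1) > 0" using T0 fin card_gt_0_iff by blast
  ultimately show ?thesis by linarith
qed

lemma pair_ok: assumes "T0 \<in> nh S1" "T0' \<in> nh S1" "T0 \<noteq> T0'" "(P,Q) \<in> S2" "T0 \<union> T0' \<subseteq> P" "B \<in> nh S2"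
  shows "\<exists>T \<in> nh S1 - {T0}. T \<subseteq> B"
proof -
  obtain T where T: "T \<in> nh S1" "T \<subseteq> B" using E[OF assms(6)] by blast
  show ?thesis
  proof (cases "T = T0")
    case False then show ?thesis using T by blast
  next
    case True
    have "T0 \<noteq> {}" using assms(1) ps_basic(3)[OF p1] unfolding nh_iff by blast
    obtain K where "(B,K) \<in> S2" using assms(6) unfolding nh_iff by blast
    then have "B = P" using ps_disj[OF p2 _ assms(4)] T True assms(5) \<open>T0 \<noteq> {}\<close> by blast
    then show ?thesis using assms by blast
  qed
qed

lemma strict: assumes fX: "finite X" and ne: "S1 \<noteq> S2" shows "card (nh S2) < card (nh S1)"
proof -
  have nhI: "(A,H) \<in> S1 \<Longrightarrow> A \<notin> hulls S1 \<Longrightarrow> A \<in> nh S1" for A H unfolding nh_iff by blast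
  have mI: "(A,H) \<in> S1 \<Longrightarrow> H \<noteq> {} \<Longrightarrow> A \<in> nh S1" for A H using nhI ps_memb[OF p1] by blast
  consider "C1 S1 S2" | "C2 S1 S2" | "C3 S1 S2" | "C4 S1 S2" using cases4[OF ne] by blast
  then show ?thesis
  proof cases
    case 1
    then obtain F F' P Q where c: "(F,{}) \<in> S1" "(F',{}) \<in> S1" "F \<noteq> F'" "F \<notin> hulls S1" "F' \<notin> hulls S1" "(P,Q) \<in> S2" "F \<union> F' \<subseteq> P"
      unfolding C1_def by blast
    show ?thesis using inj_card[OF fX nhI[OF c(1,4)] pair_ok[OF nhI[OF c(1,4)] nhI[OF c(2,5)] c(3,6,7)]] .
  next
    case 2
    then obtain Ta Tb H P Q where c: "(Ta,H) \<in> S1" "(Tb,H) \<in> S1" "Ta \<noteq> Tb" "H \<noteq> {}" "(P,Q) \<in> S2" "Ta \<union> Tb \<union> H \<subseteq> P"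
      unfolding C2_def by blast
    have "Ta \<union> Tb \<subseteq> P" using c(6) by blast
    then show ?thesis using inj_card[OF fX mI[OF c(1,4)] pair_ok[OF mI[OF c(1,4)] mI[OF c(2,4)] c(3,5)]] by blast
  next
    case 4
    then obtain T H F B where c: "(T,H) \<in> S1" "H \<noteq> {}" "(F,{}) \<in> S1" "F \<notin> hulls S1" "(B,H) \<in> S2" "T \<union> F \<subseteq> B"
      unfolding C4_def by blast
    have "T \<noteq> F" using ps_uniq[OF p1 c(1)] c(2,3) by blast
    then show ?thesis using inj_card[OF fX mI[OF c(1,2)] pair_ok[OF mI[OF c(1,2)] nhI[OF c(3,4)] _ c(5,6)]] by blast
  next
    case 3
    then obtain Fa Fb K where c: "(Fa,{}) \<in> S1" "(Fb,{}) \<in> S1" "(K,{}) \<in> S1" "Fa \<notin> hulls S1" "Fb \<notin> hulls S1" "K \<notin> hulls S1" "Fa \<noteq> Fb" "(Fa,K) \<in> S2" "(Fb,K) \<in> S2"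
      unfolding C3_def by blast
    have Kn: "K \<noteq> {}" using ps_basic(3)[OF p1 c(3)] .
    have K2: "(K,{}) \<in> S2" using ps_hull[OF p2 c(8) Kn] .
    have Kh2: "K \<in> hulls S2" using c(8) Kn unfolding hulls_iff by blast
    show ?thesis
    proof (rule inj_card[OF fX nhI[OF c(3,6)]])
      fix B assume B: "B \<in> nh S2"
      obtain T where T: "T \<in> nh S1" "T \<subseteq> B" using E[OF B] by blast
      obtain Q where BQ: "(B,Q) \<in> S2" using B unfolding nh_iff by blast
      have "T \<noteq> K"
      proof
        assume "T = K"
        then have "B = K" using ps_disj[OF p2 BQ K2] T(2) Kn by blast
        then show False using B Kh2 unfolding nh_iff by blast
      qed
      then show "\<exists>T \<in> nh S1 - {K}. T \<subseteq> B" using T by blast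
    qed
  qed
qed

end


lemma sps_leI:
  assumes "\<And>A H. (A,H) \<in> S \<Longrightarrow> \<exists>B K. (B,K) \<in> T \<and> sp_le (A,H) (B,K)"
    and "\<And>B K. (B,K) \<in> T \<Longrightarrow> K \<noteq> {} \<Longrightarrow> \<exists>A. (A,K) \<in> S \<Longrightarrow> \<exists>A. (A,K) \<in> S \<and> sp_le (A,K) (B,K)"
  shows "sps_le S T"
  unfolding sps_le_def
proof (intro conjI)
  show "\<forall>p1\<in>S. \<exists>p2\<in>T. sp_le p1 p2"
  proof
    fix p assume "p \<in> S"
    then obtain A H where "p = (A,H)" "(A,H) \<in> S" by (metis prod.collapse)
    then show "\<exists>p2\<in>T. sp_le p p2" using assms(1) by blast
  qed
  show "\<forall>(S2, H2)\<in>T. H2 \<noteq> {} \<longrightarrow> (\<exists>(S1, H1)\<in>S. H1 = H2) \<longrightarrow> (\<exists>(S1, H1)\<in>S. H1 = H2 \<and> sp_le (S1, H1) (S2, H2))"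
  proof (clarify)
    fix B K A assume h: "(B,K) \<in> T" "K \<noteq> {}" "(A,K) \<in> S"
    then obtain A' where "(A',K) \<in> S" "sp_le (A',K) (B,K)" using assms(2) by blast
    then show "\<exists>(S1, H1)\<in>S. H1 = K \<and> sp_le (S1, H1) (B, K)" by blast
  qed
qed

lemma sp_le_refl: "sp_le p p" unfolding sp_le_def by (cases p) simp

lemma d_gen:
  assumes p: "polestar_system X S" and AH: "(A,H) \<in> S" and Hn: "H \<noteq> {}"
    and same: "\<And>B. (B,H) \<in> T \<longleftrightarrow> (B,H) \<in> S" and H0: "(H,{}) \<in> T"
  shows "(H,{}) \<in> T \<and> (\<exists>B. B \<noteq> A \<and> (B,H) \<in> T) \<and> (\<forall>B C. (B,H) \<in> T \<longrightarrow> (C,H) \<in> T \<longrightarrow> B = A \<or> C = A \<or> B = C)"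
proof (intro conjI allI impI)
  show "(H,{}) \<in> T" by fact
  obtain B where "(B,H) \<in> S" "B \<noteq> A" using ps_other[OF p AH Hn] by blast
  then show "\<exists>B. B \<noteq> A \<and> (B,H) \<in> T" using same by blast
  fix B C assume "(B,H) \<in> T" "(C,H) \<in> T"
  then have BC: "(B,H) \<in> S" "(C,H) \<in> S" using same by auto
  show "B = A \<or> C = A \<or> B = C"
  proof (cases "B = A")
    case False
    then have "C = A \<or> C = B" using ps_third[OF p AH BC(1) BC(2) Hn] by blast
    then show ?thesis by blast
  qed simp
qed

lemma card_minus2: assumes "finite N" "a \<in> N" "b \<in> N" "a \<noteq> b" shows "card (N - {a,b}) + 2 = card N"
proof -
  have "{a,b} \<subseteq> N" using assms by blast
  then have "card (N - {a,b}) = card N - card {a,b}" using card_Diff_subset assms(1) finite_subset by blast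
  moreover have "card {a,b} = 2" using assms(4) by simp
  moreover have "card {a,b} \<le> card N" using card_mono[OF assms(1) \<open>{a,b} \<subseteq> N\<close>] .
  ultimately show ?thesis by linarith
qed

context two begin

lemma SP2': assumes "(B,K) \<in> S2" "K \<noteq> {}" "K \<in> hulls S1" shows "\<exists>A. (A,K) \<in> S1 \<and> sp_le (A,K) (B,K)"
proof -
  have h: "\<forall>(S2', H2)\<in>S2. H2 \<noteq> {} \<longrightarrow> (\<exists>(S1', H1)\<in>S1. H1 = H2) \<longrightarrow>
        (\<exists>(S1', H1)\<in>S1. H1 = H2 \<and> sp_le (S1', H1) (S2', H2))" using le unfolding sps_le_def by (elim conjE)
  have "\<exists>(S1', H1)\<in>S1. H1 = K" using assms(3) unfolding hulls_def by blast
  then have "\<exists>(S1', H1)\<in>S1. H1 = K \<and> sp_le (S1', H1) (B, K)" using bspec[OF h assms(1)] assms(2) by simp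
  then show ?thesis by blast
qed

end


context two begin

lemma constr1:
  assumes fX: "finite X"
    and cF: "(F,{}) \<in> S1" and cF': "(F',{}) \<in> S1" and ne: "F \<noteq> F'" and Fh: "F \<notin> hulls S1" and F'h: "F' \<notin> hulls S1"
    and PQ: "(P,Q) \<in> S2" and sub: "F \<union> F' \<subseteq> P"
  shows "\<exists>S3. polestar_system X S3 \<and> sps_le S1 S3 \<and> sps_le S3 S2 \<and> card (nh S3) + 1 = card (nh S1)"
proof -
  define U where "U = F \<union> F'"
  define S3 where "S3 = insert (U,{}) (S1 - {(F,{}),(F',{})})"
  have memU: "(U,{}) \<in> S3" unfolding S3_def by simp
  have memO: "(A,H) \<in> S1 \<Longrightarrow> A \<noteq> F \<Longrightarrow> A \<noteq> F' \<Longrightarrow> (A,H) \<in> S3" for A H unfolding S3_def by simp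
  have memE: "(A,H) \<in> S3 \<Longrightarrow> (A = U \<and> H = {}) \<or> ((A,H) \<in> S1 \<and> A \<noteq> F \<and> A \<noteq> F')" for A H
  proof -
    assume a: "(A,H) \<in> S3"
    have "(A,H) \<in> S1 \<Longrightarrow> A = F \<Longrightarrow> H = {}" using ps_uniq[OF p1 _ cF] by blast
    moreover have "(A,H) \<in> S1 \<Longrightarrow> A = F' \<Longrightarrow> H = {}" using ps_uniq[OF p1 _ cF'] by blast
    ultimately show ?thesis using a unfolding S3_def by auto
  qed
  have Fne: "F \<noteq> {}" "F' \<noteq> {}" using ps_basic(3)[OF p1 cF] ps_basic(3)[OF p1 cF'] by auto
  have FF: "F \<inter> F' = {}" using ps_disj[OF p1 cF cF'] ne by blast
  have meetU: "(A,H) \<in> S1 \<Longrightarrow> A \<inter> U \<noteq> {} \<Longrightarrow> A = F \<or> A = F'" for A H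
  proof -
    assume a: "(A,H) \<in> S1" "A \<inter> U \<noteq> {}"
    then have "A \<inter> F \<noteq> {} \<or> A \<inter> F' \<noteq> {}" unfolding U_def by blast
    then show "A = F \<or> A = F'" using ps_disj[OF p1 a(1) cF] ps_disj[OF p1 a(1) cF'] by blast
  qed
  have Unp: "(U,h) \<notin> S1" for h
  proof
    assume "(U,h) \<in> S1"
    then have "U = F \<or> U = F'" using meetU Fne unfolding U_def by blast
    then show False using FF Fne ne unfolding U_def by blast
  qed
  have same: "H \<noteq> {} \<Longrightarrow> (A,H) \<in> S3 \<longleftrightarrow> (A,H) \<in> S1" for A H
  proof -
    assume Hn: "H \<noteq> {}"
    have "(A,H) \<in> S1 \<Longrightarrow> A \<noteq> F \<and> A \<noteq> F'" using ps_uniq[OF p1 _ cF] ps_uniq[OF p1 _ cF'] Hn by blast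
    then show ?thesis using memE[of A H] memO[of A H] Hn by blast
  qed
  have hulls3: "hulls S3 = hulls S1"
  proof (rule set_eqI)
    fix H show "H \<in> hulls S3 \<longleftrightarrow> H \<in> hulls S1" unfolding hulls_iff using same by blast
  qed
  have pol: "polestar_system X S3"
  proof (rule polestarI)
    fix A H assume "(A,H) \<in> S3"
    then consider "A = U" "H = {}" | "(A,H) \<in> S1" using memE by blast
    then show "A \<noteq> {} \<and> A \<inter> H = {}"
    proof cases
      case 1 then show ?thesis using Fne unfolding U_def by blast
    next
      case 2 then show ?thesis using ps_basic[OF p1 2] by blast
    qed
  next
    have "\<Union>(parts S1) = X" using ps_part[OF p1] unfolding is_partition_def by blast
    moreover have "\<Union>(parts S3) = \<Union>(parts S1)"
    proof
      show "\<Union>(parts S3) \<subseteq> \<Union>(parts S1)"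
      proof
        fix x assume "x \<in> \<Union>(parts S3)"
        then obtain A H where "(A,H) \<in> S3" "x \<in> A" unfolding parts_def by blast
        then have "(A = U \<and> x \<in> U) \<or> (A,H) \<in> S1" using memE \<open>x \<in> A\<close> by blast
        then show "x \<in> \<Union>(parts S1)" using cF cF' \<open>x \<in> A\<close> unfolding U_def parts_def by blast
      qed
      show "\<Union>(parts S1) \<subseteq> \<Union>(parts S3)"
      proof
        fix x assume "x \<in> \<Union>(parts S1)"
        then obtain A H where AH: "(A,H) \<in> S1" "x \<in> A" unfolding parts_def by blast
        show "x \<in> \<Union>(parts S3)"
        proof (cases "A = F \<or> A = F'")
          case True
          then have "x \<in> U" using AH unfolding U_def by blast
          moreover have "(U,{}) \<in> S3" using memU by blast
          ultimately show ?thesis unfolding parts_def by blast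
        next
          case False
          then have "(A,H) \<in> S3" using memO AH by blast
          then show ?thesis using AH unfolding parts_def by blast
        qed
      qed
    qed
    ultimately show "\<Union>(parts S3) = X" by simp
  next
    fix A H B H' assume a: "(A,H) \<in> S3" "(B,H') \<in> S3" "A \<inter> B \<noteq> {}"
    show "A = B \<and> H = H'"
    proof (cases "(A,H) = (U,{})")
      case True
      show ?thesis
      proof (cases "(B,H') = (U,{})")
        case False
        then have "(B,H') \<in> S1" "B \<noteq> F" "B \<noteq> F'" using memE[OF a(2)] by auto
        moreover have "B \<inter> U \<noteq> {}" using a(3) True by blast
        ultimately show ?thesis using meetU by blast
      qed (use True in simp)
    next
      case False
      then have A1: "(A,H) \<in> S1" "A \<noteq> F" "A \<noteq> F'" using memE[OF a(1)] by auto
      show ?thesis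
      proof (cases "(B,H') = (U,{})")
        case True
        then have "A \<inter> U \<noteq> {}" using a(3) by blast
        then show ?thesis using meetU A1 by blast
      next
        case False
        then have "(B,H') \<in> S1" using memE[OF a(2)] by auto
        then show ?thesis using ps_disj[OF p1 A1(1) _ a(3)] ps_uniq[OF p1 A1(1)] by blast
      qed
    qed
  next
    fix A H assume a: "(A,H) \<in> S3" "H \<noteq> {}"
    then have A1: "(A,H) \<in> S1" using same by blast
    have H0: "(H,{}) \<in> S1" using ps_hull[OF p1 A1 a(2)] .
    have "H \<in> hulls S1" using A1 a(2) unfolding hulls_iff by blast
    then have "H \<noteq> F" "H \<noteq> F'" using Fh F'h by auto
    then have "(H,{}) \<in> S3" using memO H0 by blast
    then show "(H,{}) \<in> S3 \<and> (\<exists>B. B \<noteq> A \<and> (B,H) \<in> S3) \<and> (\<forall>B C. (B,H) \<in> S3 \<longrightarrow> (C,H) \<in> S3 \<longrightarrow> B = A \<or> C = A \<or> B = C)"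
      using d_gen[OF p1 A1 a(2)] same[OF a(2)] by blast
  qed
  have le13: "sps_le S1 S3"
  proof (rule sps_leI)
    fix A H assume AH: "(A,H) \<in> S1"
    show "\<exists>B K. (B,K) \<in> S3 \<and> sp_le (A,H) (B,K)"
    proof (cases "A = F \<or> A = F'")
      case True
      then have "H = {}" using ps_uniq[OF p1 AH] cF cF' by blast
      then have "sp_le (A,H) (U,{})" using True unfolding sp_le_simp U_def by blast
      moreover have "(U,{}) \<in> S3" using memU by blast
      ultimately show ?thesis by blast
    next
      case False
      then have "(A,H) \<in> S3" using memO AH by blast
      then show ?thesis using sp_le_refl by blast
    qed
  next
    fix B K assume "(B,K) \<in> S3" "K \<noteq> {}"
    then have "(B,K) \<in> S1" using same by blast
    then show "\<exists>A. (A,K) \<in> S1 \<and> sp_le (A,K) (B,K)" using sp_le_refl by blast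
  qed
  have le32: "sps_le S3 S2"
  proof (rule sps_leI)
    fix A H assume AH: "(A,H) \<in> S3"
    show "\<exists>B K. (B,K) \<in> S2 \<and> sp_le (A,H) (B,K)"
    proof (cases "(A,H) = (U,{})")
      case True
      then have "sp_le (A,H) (P,Q)" using sub unfolding sp_le_simp U_def by auto
      then show ?thesis using PQ by blast
    next
      case False
      then have "(A,H) \<in> S1" using memE[OF AH] by auto
      then show ?thesis using SP1 by blast
    qed
  next
    fix B K assume BK: "(B,K) \<in> S2" "K \<noteq> {}" "\<exists>A. (A,K) \<in> S3"
    then have "K \<in> hulls S1" using same unfolding hulls_iff by blast
    then obtain A where "(A,K) \<in> S1" "sp_le (A,K) (B,K)" using SP2'[OF BK(1,2)] by blast
    then show "\<exists>A. (A,K) \<in> S3 \<and> sp_le (A,K) (B,K)" using same[OF BK(2)] by blast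
  qed
  have nh3: "nh S3 = insert U (nh S1 - {F,F'})"
  proof
    show "nh S3 \<subseteq> insert U (nh S1 - {F,F'})"
    proof
      fix A assume "A \<in> nh S3"
      then obtain H where AH: "(A,H) \<in> S3" "A \<notin> hulls S3" unfolding nh_iff by blast
      then have "A \<notin> hulls S1" using hulls3 by simp
      show "A \<in> insert U (nh S1 - {F,F'})"
      proof (cases "A = U")
        case False
        then have "(A,H) \<in> S1" "A \<noteq> F" "A \<noteq> F'" using memE[OF AH(1)] by auto
        then have "A \<in> nh S1" using \<open>A \<notin> hulls S1\<close> unfolding nh_iff by blast
        then show ?thesis using \<open>A \<noteq> F\<close> \<open>A \<noteq> F'\<close> by blast
      qed simp
    qed
    show "insert U (nh S1 - {F,F'}) \<subseteq> nh S3"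
    proof
      fix A assume A: "A \<in> insert U (nh S1 - {F,F'})"
      show "A \<in> nh S3"
      proof (cases "A = U")
        case True
        have "U \<notin> parts S1" using Unp unfolding parts_iff by blast
        then have "U \<notin> hulls S1" using hulls_sub[OF p1] by blast
        then have "U \<notin> hulls S3" using hulls3 by simp
        then show ?thesis using True memU unfolding nh_iff by blast
      next
        case False
        then have "A \<in> nh S1" "A \<noteq> F" "A \<noteq> F'" using A by auto
        then obtain H where "(A,H) \<in> S1" "A \<notin> hulls S1" "A \<noteq> F" "A \<noteq> F'" unfolding nh_iff by blast
        then have "(A,H) \<in> S3" "A \<notin> hulls S3" using memO hulls3 by auto
        then show ?thesis unfolding nh_iff by blast
      qed
    qed
  qed
  have fin: "finite (nh S1)" using nh_fin[OF p1 fX] .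
  have "U \<notin> nh S1" using Unp unfolding nh_iff by blast
  then have "U \<notin> nh S1 - {F,F'}" by blast
  then have "card (nh S3) = card (nh S1 - {F,F'}) + 1" unfolding nh3 using fin by simp
  moreover have "F \<in> nh S1" "F' \<in> nh S1" using cF cF' Fh F'h unfolding nh_iff by auto
  then have "card (nh S1 - {F,F'}) + 2 = card (nh S1)" using card_minus2[OF fin _ _ ne] by blast
  ultimately have "card (nh S3) + 1 = card (nh S1)" by linarith
  then show ?thesis using pol le13 le32 by blast
qed

end


context two begin

lemma constr2:
  assumes fX: "finite X"
    and cA: "(Ta,H) \<in> S1" and cB: "(Tb,H) \<in> S1" and ne: "Ta \<noteq> Tb" and Hn: "H \<noteq> {}"
    and PQ: "(P,Q) \<in> S2" and sub: "Ta \<union> Tb \<union> H \<subseteq> P"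
  shows "\<exists>S3. polestar_system X S3 \<and> sps_le S1 S3 \<and> sps_le S3 S2 \<and> card (nh S3) + 1 = card (nh S1)"
proof -
  define U where "U = Ta \<union> Tb \<union> H"
  define S3 where "S3 = insert (U,{}) (S1 - {(Ta,H),(Tb,H),(H,{})})"
  have H0: "(H,{}) \<in> S1" using ps_hull[OF p1 cA Hn] .
  have TaH: "Ta \<noteq> H" using ps_uniq[OF p1 cA] H0 Hn by blast
  have TbH: "Tb \<noteq> H" using ps_uniq[OF p1 cB] H0 Hn by blast
  have memU: "(U,{}) \<in> S3" unfolding S3_def by simp
  have memO: "(A,K) \<in> S1 \<Longrightarrow> A \<noteq> Ta \<Longrightarrow> A \<noteq> Tb \<Longrightarrow> A \<noteq> H \<Longrightarrow> (A,K) \<in> S3" for A K unfolding S3_def by simp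
  have atTa: "(A,K) \<in> S1 \<Longrightarrow> A = Ta \<Longrightarrow> K = H" for A K using ps_uniq[OF p1 _ cA] by blast
  have atTb: "(A,K) \<in> S1 \<Longrightarrow> A = Tb \<Longrightarrow> K = H" for A K using ps_uniq[OF p1 _ cB] by blast
  have atH: "(A,K) \<in> S1 \<Longrightarrow> A = H \<Longrightarrow> K = {}" for A K using ps_uniq[OF p1 _ H0] by blast
  have memE: "(A,K) \<in> S3 \<Longrightarrow> (A = U \<and> K = {}) \<or> ((A,K) \<in> S1 \<and> A \<noteq> Ta \<and> A \<noteq> Tb \<and> A \<noteq> H)" for A K
  proof -
    assume a: "(A,K) \<in> S3"
    then have "(A,K) = (U,{}) \<or> ((A,K) \<in> S1 \<and> (A,K) \<noteq> (Ta,H) \<and> (A,K) \<noteq> (Tb,H) \<and> (A,K) \<noteq> (H,{}))"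
      unfolding S3_def by blast
    then show ?thesis
    proof
      assume "(A,K) = (U,{})" then show ?thesis by simp
    next
      assume b: "(A,K) \<in> S1 \<and> (A,K) \<noteq> (Ta,H) \<and> (A,K) \<noteq> (Tb,H) \<and> (A,K) \<noteq> (H,{})"
      then have "A \<noteq> Ta" using atTa by blast
      moreover have "A \<noteq> Tb" using b atTb by blast
      moreover have "A \<noteq> H" using b atH by blast
      ultimately show ?thesis using b by blast
    qed
  qed
  have ne3: "Ta \<noteq> {}" "Tb \<noteq> {}" using ps_basic(3)[OF p1 cA] ps_basic(3)[OF p1 cB] by auto
  have dj: "Ta \<inter> H = {}" "Tb \<inter> H = {}" using ps_basic(4)[OF p1 cA] ps_basic(4)[OF p1 cB] by auto
  have meetU: "(A,K) \<in> S1 \<Longrightarrow> A \<inter> U \<noteq> {} \<Longrightarrow> A = Ta \<or> A = Tb \<or> A = H" for A K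
  proof -
    assume a: "(A,K) \<in> S1" "A \<inter> U \<noteq> {}"
    then have "A \<inter> Ta \<noteq> {} \<or> A \<inter> Tb \<noteq> {} \<or> A \<inter> H \<noteq> {}" unfolding U_def by blast
    then show ?thesis using ps_disj[OF p1 a(1) cA] ps_disj[OF p1 a(1) cB] ps_disj[OF p1 a(1) H0] by blast
  qed
  have Unp: "(U,h) \<notin> S1" for h
  proof
    assume U1: "(U,h) \<in> S1"
    have "U \<inter> U \<noteq> {}" using ne3 unfolding U_def by blast
    then have "U = Ta \<or> U = Tb \<or> U = H" using meetU[OF U1] by blast
    then show False using dj ne3 Hn unfolding U_def by blast
  qed
  have hullH: "(A,H) \<in> S1 \<Longrightarrow> A = Ta \<or> A = Tb" for A using ps_third[OF p1 cA cB _ Hn ne] by blast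
  have notH: "(A,H) \<notin> S3" for A
  proof
    assume "(A,H) \<in> S3"
    then have "(A,H) \<in> S1 \<and> A \<noteq> Ta \<and> A \<noteq> Tb" using memE Hn by blast
    then show False using hullH by blast
  qed
  have same: "K \<noteq> {} \<Longrightarrow> K \<noteq> H \<Longrightarrow> (A,K) \<in> S3 \<longleftrightarrow> (A,K) \<in> S1" for A K
  proof -
    assume Kn: "K \<noteq> {}" "K \<noteq> H"
    have "(A,K) \<in> S1 \<Longrightarrow> A \<noteq> Ta \<and> A \<noteq> Tb \<and> A \<noteq> H" using atTa[of A K] atTb[of A K] atH[of A K] Kn by blast
    then show ?thesis using memE[of A K] memO[of A K] Kn by blast
  qed
  have hulls3: "hulls S3 = hulls S1 - {H}"
  proof (rule set_eqI)
    fix K show "K \<in> hulls S3 \<longleftrightarrow> K \<in> hulls S1 - {H}"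
    proof (cases "K = H")
      case True then show ?thesis using notH unfolding hulls_iff by blast
    next
      case False
      have "K \<in> hulls S3 \<longleftrightarrow> K \<in> hulls S1" using same[of K] False unfolding hulls_iff by blast
      then show ?thesis using False by blast
    qed
  qed
  have pol: "polestar_system X S3"
  proof (rule polestarI)
    fix A K assume "(A,K) \<in> S3"
    then consider "A = U" "K = {}" | "(A,K) \<in> S1" using memE by blast
    then show "A \<noteq> {} \<and> A \<inter> K = {}"
    proof cases
      case 1 then show ?thesis using ne3 unfolding U_def by blast
    next
      case 2 then show ?thesis using ps_basic[OF p1 2] by blast
    qed
  next
    have "\<Union>(parts S1) = X" using ps_part[OF p1] unfolding is_partition_def by blast
    moreover have "\<Union>(parts S3) = \<Union>(parts S1)"
    proof
      show "\<Union>(parts S3) \<subseteq> \<Union>(parts S1)"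
      proof
        fix x assume "x \<in> \<Union>(parts S3)"
        then obtain A K where "(A,K) \<in> S3" "x \<in> A" unfolding parts_def by blast
        then have "(A = U \<and> x \<in> U) \<or> (A,K) \<in> S1" using memE \<open>x \<in> A\<close> by blast
        then show "x \<in> \<Union>(parts S1)" using cA cB H0 \<open>x \<in> A\<close> unfolding U_def parts_def by blast
      qed
      show "\<Union>(parts S1) \<subseteq> \<Union>(parts S3)"
      proof
        fix x assume "x \<in> \<Union>(parts S1)"
        then obtain A K where AK: "(A,K) \<in> S1" "x \<in> A" unfolding parts_def by blast
        show "x \<in> \<Union>(parts S3)"
        proof (cases "A = Ta \<or> A = Tb \<or> A = H")
          case True
          then have "x \<in> U" using AK unfolding U_def by blast
          then show ?thesis using memU unfolding parts_def by blast
        next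
          case False
          then have "(A,K) \<in> S3" using memO AK by blast
          then show ?thesis using AK unfolding parts_def by blast
        qed
      qed
    qed
    ultimately show "\<Union>(parts S3) = X" by simp
  next
    fix A K B K' assume a: "(A,K) \<in> S3" "(B,K') \<in> S3" "A \<inter> B \<noteq> {}"
    show "A = B \<and> K = K'"
    proof (cases "A = U \<and> K = {}")
      case True
      show ?thesis
      proof (cases "B = U \<and> K' = {}")
        case False
        then have "(B,K') \<in> S1" "B \<noteq> Ta" "B \<noteq> Tb" "B \<noteq> H" using memE[OF a(2)] by auto
        moreover have "B \<inter> U \<noteq> {}" using a(3) True by blast
        ultimately show ?thesis using meetU by blast
      qed (use True in simp)
    next
      case False
      then have A1: "(A,K) \<in> S1" "A \<noteq> Ta" "A \<noteq> Tb" "A \<noteq> H" using memE[OF a(1)] by auto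
      show ?thesis
      proof (cases "B = U \<and> K' = {}")
        case True
        then have "A \<inter> U \<noteq> {}" using a(3) by blast
        then show ?thesis using meetU A1 by blast
      next
        case False
        then have "(B,K') \<in> S1" using memE[OF a(2)] by auto
        then show ?thesis using ps_disj[OF p1 A1(1) _ a(3)] ps_uniq[OF p1 A1(1)] by blast
      qed
    qed
  next
    fix A K assume a: "(A,K) \<in> S3" "K \<noteq> {}"
    have KH: "K \<noteq> H" using notH a(1) by blast
    then have A1: "(A,K) \<in> S1" using same a by blast
    have K0: "(K,{}) \<in> S1" using ps_hull[OF p1 A1 a(2)] .
    have "K \<noteq> Ta" using atTa[OF K0] Hn by blast
    moreover have "K \<noteq> Tb" using atTb[OF K0] Hn by blast
    ultimately have "(K,{}) \<in> S3" using memO K0 KH by blast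
    then show "(K,{}) \<in> S3 \<and> (\<exists>B. B \<noteq> A \<and> (B,K) \<in> S3) \<and> (\<forall>B C. (B,K) \<in> S3 \<longrightarrow> (C,K) \<in> S3 \<longrightarrow> B = A \<or> C = A \<or> B = C)"
      using d_gen[OF p1 A1 a(2)] same[OF a(2) KH] by blast
  qed
  have le13: "sps_le S1 S3"
  proof (rule sps_leI)
    fix A K assume AK: "(A,K) \<in> S1"
    show "\<exists>B K'. (B,K') \<in> S3 \<and> sp_le (A,K) (B,K')"
    proof (cases "A = Ta \<or> A = Tb \<or> A = H")
      case True
      then have "K = H \<or> K = {}" using atTa[OF AK] atTb[OF AK] atH[OF AK] by blast
      then have "A \<union> K \<subseteq> U" using True unfolding U_def by blast
      then have "sp_le (A,K) (U,{})" unfolding sp_le_simp by blast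
      then show ?thesis using memU by blast
    next
      case False
      then have "(A,K) \<in> S3" using memO AK by blast
      then show ?thesis using sp_le_refl by blast
    qed
  next
    fix B K assume a: "(B,K) \<in> S3" "K \<noteq> {}"
    then have "K \<noteq> H" using notH by blast
    then have "(B,K) \<in> S1" using same a by blast
    then show "\<exists>A. (A,K) \<in> S1 \<and> sp_le (A,K) (B,K)" using sp_le_refl by blast
  qed
  have le32: "sps_le S3 S2"
  proof (rule sps_leI)
    fix A K assume AK: "(A,K) \<in> S3"
    show "\<exists>B K'. (B,K') \<in> S2 \<and> sp_le (A,K) (B,K')"
    proof (cases "A = U \<and> K = {}")
      case True
      then have "sp_le (A,K) (P,Q)" using sub unfolding sp_le_simp U_def by auto
      then show ?thesis using PQ by blast
    next
      case False
      then have "(A,K) \<in> S1" using memE[OF AK] by auto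
      then show ?thesis using SP1 by blast
    qed
  next
    fix B K assume BK: "(B,K) \<in> S2" "K \<noteq> {}" "\<exists>A. (A,K) \<in> S3"
    then obtain A where A3: "(A,K) \<in> S3" by blast
    have KH: "K \<noteq> H" using notH A3 by blast
    then have "(A,K) \<in> S1" using same A3 BK(2) by blast
    then have "K \<in> hulls S1" using BK(2) unfolding hulls_iff by blast
    then obtain A' where "(A',K) \<in> S1" "sp_le (A',K) (B,K)" using SP2'[OF BK(1,2)] by blast
    then show "\<exists>A. (A,K) \<in> S3 \<and> sp_le (A,K) (B,K)" using same[OF BK(2) KH] by blast
  qed
  have Hh: "H \<in> hulls S1" using cA Hn unfolding hulls_iff by blast
  have nh3: "nh S3 = insert U (nh S1 - {Ta,Tb})"
  proof
    show "nh S3 \<subseteq> insert U (nh S1 - {Ta,Tb})"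
    proof
      fix A assume "A \<in> nh S3"
      then obtain K where AK: "(A,K) \<in> S3" "A \<notin> hulls S3" unfolding nh_iff by blast
      show "A \<in> insert U (nh S1 - {Ta,Tb})"
      proof (cases "A = U \<and> K = {}")
        case False
        then have A1: "(A,K) \<in> S1" "A \<noteq> Ta" "A \<noteq> Tb" "A \<noteq> H" using memE[OF AK(1)] by auto
        then have "A \<notin> hulls S1" using AK(2) hulls3 by blast
        then have "A \<in> nh S1" using A1(1) unfolding nh_iff by blast
        then show ?thesis using A1 by blast
      qed simp
    qed
    show "insert U (nh S1 - {Ta,Tb}) \<subseteq> nh S3"
    proof
      fix A assume A: "A \<in> insert U (nh S1 - {Ta,Tb})"
      show "A \<in> nh S3"
      proof (cases "A = U")
        case True
        have "U \<notin> parts S1" using Unp unfolding parts_iff by blast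
        then have "U \<notin> hulls S1" using hulls_sub[OF p1] by blast
        then have "U \<notin> hulls S3" using hulls3 by simp
        then show ?thesis using True memU unfolding nh_iff by blast
      next
        case False
        then have "A \<in> nh S1" "A \<noteq> Ta" "A \<noteq> Tb" using A by auto
        then obtain K where AK: "(A,K) \<in> S1" "A \<notin> hulls S1" "A \<noteq> Ta" "A \<noteq> Tb" unfolding nh_iff by blast
        then have "A \<noteq> H" using Hh by blast
        then have "(A,K) \<in> S3" "A \<notin> hulls S3" using memO AK hulls3 by auto
        then show ?thesis unfolding nh_iff by blast
      qed
    qed
  qed
  have fin: "finite (nh S1)" using nh_fin[OF p1 fX] .
  have "U \<notin> nh S1" using Unp unfolding nh_iff by blast
  then have "U \<notin> nh S1 - {Ta,Tb}" by blast
  then have "card (nh S3) = card (nh S1 - {Ta,Tb}) + 1" unfolding nh3 using fin by simp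
  moreover have "Ta \<in> nh S1" "Tb \<in> nh S1" using cA cB ps_memb[OF p1 cA Hn] ps_memb[OF p1 cB Hn] unfolding nh_iff by auto
  then have "card (nh S1 - {Ta,Tb}) + 2 = card (nh S1)" using card_minus2[OF fin _ _ ne] by blast
  ultimately have "card (nh S3) + 1 = card (nh S1)" by linarith
  then show ?thesis using pol le13 le32 by blast
qed

end


context two begin

lemma constr3:
  assumes fX: "finite X"
    and cA: "(Fa,{}) \<in> S1" and cB: "(Fb,{}) \<in> S1" and cK: "(K,{}) \<in> S1"
    and Fah: "Fa \<notin> hulls S1" and Fbh: "Fb \<notin> hulls S1" and Kh: "K \<notin> hulls S1"
    and ne: "Fa \<noteq> Fb" and dA: "(Fa,K) \<in> S2" and dB: "(Fb,K) \<in> S2"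
  shows "\<exists>S3. polestar_system X S3 \<and> sps_le S1 S3 \<and> sps_le S3 S2 \<and> card (nh S3) + 1 = card (nh S1)"
proof -
  define S3 where "S3 = (S1 - {(Fa,{}),(Fb,{})}) \<union> {(Fa,K),(Fb,K)}"
  have Kn: "K \<noteq> {}" using ps_basic(3)[OF p1 cK] .
  have Fane: "Fa \<noteq> {}" "Fb \<noteq> {}" using ps_basic(3)[OF p1 cA] ps_basic(3)[OF p1 cB] by auto
  have djK: "Fa \<inter> K = {}" "Fb \<inter> K = {}" using ps_basic(4)[OF p2 dA] ps_basic(4)[OF p2 dB] by auto
  have FaK: "Fa \<noteq> K" "Fb \<noteq> K" using djK Fane by auto
  have memN: "(Fa,K) \<in> S3" "(Fb,K) \<in> S3" unfolding S3_def by auto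
  have memO: "(A,H) \<in> S1 \<Longrightarrow> A \<noteq> Fa \<Longrightarrow> A \<noteq> Fb \<Longrightarrow> (A,H) \<in> S3" for A H unfolding S3_def by simp
  have atA: "(A,H) \<in> S1 \<Longrightarrow> A = Fa \<Longrightarrow> H = {}" for A H using ps_uniq[OF p1 _ cA] by blast
  have atB: "(A,H) \<in> S1 \<Longrightarrow> A = Fb \<Longrightarrow> H = {}" for A H using ps_uniq[OF p1 _ cB] by blast
  have memE: "(A,H) \<in> S3 \<Longrightarrow> (A = Fa \<and> H = K) \<or> (A = Fb \<and> H = K) \<or> ((A,H) \<in> S1 \<and> A \<noteq> Fa \<and> A \<noteq> Fb)" for A H
  proof -
    assume a: "(A,H) \<in> S3"
    then have "(A,H) = (Fa,K) \<or> (A,H) = (Fb,K) \<or> ((A,H) \<in> S1 \<and> (A,H) \<noteq> (Fa,{}) \<and> (A,H) \<noteq> (Fb,{}))"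
      unfolding S3_def by blast
    then show ?thesis
    proof (elim disjE)
      assume b: "(A,H) \<in> S1 \<and> (A,H) \<noteq> (Fa,{}) \<and> (A,H) \<noteq> (Fb,{})"
      then have "A \<noteq> Fa" using atA by blast
      moreover have "A \<noteq> Fb" using b atB by blast
      ultimately show ?thesis using b by blast
    qed simp_all
  qed
  have KnotS1: "(A,K) \<notin> S1" for A using Kh Kn unfolding hulls_iff by blast
  have hullK: "(B,K) \<in> S3 \<longleftrightarrow> B = Fa \<or> B = Fb" for B using memE[of B K] memN KnotS1 by blast
  have same: "H \<noteq> {} \<Longrightarrow> H \<noteq> K \<Longrightarrow> (A,H) \<in> S3 \<longleftrightarrow> (A,H) \<in> S1" for A H
  proof -
    assume Hn: "H \<noteq> {}" "H \<noteq> K"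
    have "(A,H) \<in> S1 \<Longrightarrow> A \<noteq> Fa \<and> A \<noteq> Fb" using atA[of A H] atB[of A H] Hn by blast
    then show ?thesis using memE[of A H] memO[of A H] Hn by blast
  qed
  have partS: "(A,H) \<in> S3 \<Longrightarrow> \<exists>h. (A,h) \<in> S1" for A H using memE[of A H] cA cB by blast
  have parts3: "parts S3 = parts S1"
  proof (rule set_eqI)
    fix A show "A \<in> parts S3 \<longleftrightarrow> A \<in> parts S1"
    proof
      assume "A \<in> parts S3" then show "A \<in> parts S1" using partS unfolding parts_iff by blast
    next
      assume "A \<in> parts S1"
      then obtain h where h: "(A,h) \<in> S1" unfolding parts_iff by blast
      show "A \<in> parts S3"
      proof (cases "A = Fa \<or> A = Fb")
        case True then show ?thesis using memN unfolding parts_iff by blast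
      next
        case False then show ?thesis using memO[OF h] unfolding parts_iff by blast
      qed
    qed
  qed
  have uniq3: "(A,H) \<in> S3 \<Longrightarrow> (A,H') \<in> S3 \<Longrightarrow> H = H'" for A H H'
  proof -
    assume a: "(A,H) \<in> S3" "(A,H') \<in> S3"
    show "H = H'"
    proof (cases "A = Fa \<or> A = Fb")
      case True
      then have "H = K" "H' = K" using memE[OF a(1)] memE[OF a(2)] by auto
      then show ?thesis by simp
    next
      case False
      then have "(A,H) \<in> S1" "(A,H') \<in> S1" using memE[OF a(1)] memE[OF a(2)] by auto
      then show ?thesis using ps_uniq[OF p1] by blast
    qed
  qed
  have hulls3: "hulls S3 = insert K (hulls S1)"
  proof (rule set_eqI)
    fix H show "H \<in> hulls S3 \<longleftrightarrow> H \<in> insert K (hulls S1)"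
    proof (cases "H = K")
      case True then show ?thesis using memN Kn unfolding hulls_iff by blast
    next
      case False
      have "H \<in> hulls S3 \<longleftrightarrow> H \<in> hulls S1" using same[of H] False unfolding hulls_iff by blast
      then show ?thesis using False by blast
    qed
  qed
  have pol: "polestar_system X S3"
  proof (rule polestarI)
    fix A H assume a: "(A,H) \<in> S3"
    then consider "A = Fa" "H = K" | "A = Fb" "H = K" | "(A,H) \<in> S1" using memE by blast
    then show "A \<noteq> {} \<and> A \<inter> H = {}"
    proof cases
      case 1 then show ?thesis using Fane djK by blast
    next
      case 2 then show ?thesis using Fane djK by blast
    next
      case 3 then show ?thesis using ps_basic[OF p1 3] by blast
    qed
  next
    show "\<Union>(parts S3) = X" using parts3 ps_part[OF p1] unfolding is_partition_def by simp
  next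
    fix A H B H' assume a: "(A,H) \<in> S3" "(B,H') \<in> S3" "A \<inter> B \<noteq> {}"
    obtain h h' where "(A,h) \<in> S1" "(B,h') \<in> S1" using partS a by blast
    then have "A = B" using ps_disj[OF p1] a(3) by blast
    then show "A = B \<and> H = H'" using uniq3 a by blast
  next
    fix A H assume a: "(A,H) \<in> S3" "H \<noteq> {}"
    show "(H,{}) \<in> S3 \<and> (\<exists>B. B \<noteq> A \<and> (B,H) \<in> S3) \<and> (\<forall>B C. (B,H) \<in> S3 \<longrightarrow> (C,H) \<in> S3 \<longrightarrow> B = A \<or> C = A \<or> B = C)"
    proof (cases "H = K")
      case True
      have K3: "(K,{}) \<in> S3" using memO[OF cK] FaK by auto
      have A2: "A = Fa \<or> A = Fb" using hullK a(1) True by blast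
      have ex: "\<exists>B. B \<noteq> A \<and> (B,H) \<in> S3" using A2 memN True ne by blast
      have "\<forall>B C. (B,H) \<in> S3 \<longrightarrow> (C,H) \<in> S3 \<longrightarrow> B = A \<or> C = A \<or> B = C"
        using hullK True A2 by blast
      then show ?thesis using K3 ex True by blast
    next
      case False
      then have A1: "(A,H) \<in> S1" using same a by blast
      have H0: "(H,{}) \<in> S1" using ps_hull[OF p1 A1 a(2)] .
      have "H \<in> hulls S1" using A1 a(2) unfolding hulls_iff by blast
      then have "H \<noteq> Fa" "H \<noteq> Fb" using Fah Fbh by auto
      then have "(H,{}) \<in> S3" using memO H0 by blast
      then show ?thesis using d_gen[OF p1 A1 a(2)] same[OF a(2) False] by blast
    qed
  qed
  have le13: "sps_le S1 S3"
  proof (rule sps_leI)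
    fix A H assume AH: "(A,H) \<in> S1"
    show "\<exists>B K'. (B,K') \<in> S3 \<and> sp_le (A,H) (B,K')"
    proof (cases "A = Fa \<or> A = Fb")
      case True
      then have "H = {}" using atA[OF AH] atB[OF AH] by blast
      then have "sp_le (A,H) (A,K)" unfolding sp_le_simp by blast
      moreover have "(A,K) \<in> S3" using True memN by blast
      ultimately show ?thesis by blast
    next
      case False
      then have "(A,H) \<in> S3" using memO AH by blast
      then show ?thesis using sp_le_refl by blast
    qed
  next
    fix B H assume a: "(B,H) \<in> S3" "H \<noteq> {}" "\<exists>A. (A,H) \<in> S1"
    then have "H \<noteq> K" using KnotS1 by blast
    then have "(B,H) \<in> S1" using same a by blast
    then show "\<exists>A. (A,H) \<in> S1 \<and> sp_le (A,H) (B,H)" using sp_le_refl by blast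
  qed
  have le32: "sps_le S3 S2"
  proof (rule sps_leI)
    fix A H assume AH: "(A,H) \<in> S3"
    show "\<exists>B K'. (B,K') \<in> S2 \<and> sp_le (A,H) (B,K')"
    proof (cases "A = Fa \<or> A = Fb")
      case True
      then have "H = K" using memE[OF AH] by blast
      then have "(A,H) \<in> S2" using True dA dB by blast
      then show ?thesis using sp_le_refl by blast
    next
      case False
      then have "(A,H) \<in> S1" using memE[OF AH] by auto
      then show ?thesis using SP1 by blast
    qed
  next
    fix B H assume BH: "(B,H) \<in> S2" "H \<noteq> {}" "\<exists>A. (A,H) \<in> S3"
    show "\<exists>A. (A,H) \<in> S3 \<and> sp_le (A,H) (B,H)"
    proof (cases "H = K")
      case True
      then have "B = Fa \<or> B = Fb" using ps_third[OF p2 dA dB _ Kn ne] BH(1) by blast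
      then have "(B,H) \<in> S3" using hullK True by blast
      then show ?thesis using sp_le_refl by blast
    next
      case False
      obtain A where A3: "(A,H) \<in> S3" using BH(3) by blast
      then have "(A,H) \<in> S1" using same BH(2) False by blast
      then have "H \<in> hulls S1" using BH(2) unfolding hulls_iff by blast
      then obtain A' where "(A',H) \<in> S1" "sp_le (A',H) (B,H)" using SP2'[OF BH(1,2)] by blast
      then show ?thesis using same[OF BH(2) False] by blast
    qed
  qed
  have nh3: "nh S3 = nh S1 - {K}" unfolding nh_def parts3 hulls3 by blast
  have fin: "finite (nh S1)" using nh_fin[OF p1 fX] .
  have "K \<in> nh S1" using cK Kh unfolding nh_iff by blast
  then have "card (nh S3) + 1 = card (nh S1)" unfolding nh3 using fin
    by (metis One_nat_def Suc_pred' add.right_neutral add_Suc_right card_Diff_singleton card_gt_0_iff empty_iff)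
  then show ?thesis using pol le13 le32 by blast
qed

end


context two begin

lemma constr4:
  assumes fX: "finite X"
    and cT: "(T,H) \<in> S1" and Hn: "H \<noteq> {}" and cF: "(F,{}) \<in> S1" and Fh: "F \<notin> hulls S1"
    and BH: "(B,H) \<in> S2" and sub: "T \<union> F \<subseteq> B"
  shows "\<exists>S3. polestar_system X S3 \<and> sps_le S1 S3 \<and> sps_le S3 S2 \<and> card (nh S3) + 1 = card (nh S1)"
proof -
  define U where "U = T \<union> F"
  define S3 where "S3 = insert (U,H) (S1 - {(T,H),(F,{})})"
  have H0: "(H,{}) \<in> S1" using ps_hull[OF p1 cT Hn] .
  have TF: "T \<noteq> F" using ps_uniq[OF p1 cT] cF Hn by blast
  have Tne: "T \<noteq> {}" and Fne: "F \<noteq> {}" using ps_basic(3)[OF p1 cT] ps_basic(3)[OF p1 cF] by auto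
  have TFd: "T \<inter> F = {}" using ps_disj[OF p1 cT cF] TF by blast
  have Hh: "H \<in> hulls S1" using cT Hn unfolding hulls_iff by blast
  have HF: "H \<noteq> F" using Hh Fh by blast
  have HT: "H \<noteq> T" using ps_uniq[OF p1 cT] H0 Hn by blast
  have THd: "T \<inter> H = {}" using ps_basic(4)[OF p1 cT] .
  have FHd: "F \<inter> H = {}" using ps_disj[OF p1 cF H0] HF by blast
  obtain Tb where Tb: "(Tb,H) \<in> S1" "Tb \<noteq> T" using ps_other[OF p1 cT Hn] by blast
  have TbF: "Tb \<noteq> F" using ps_uniq[OF p1 Tb(1)] cF Hn by blast
  have Tbd: "Tb \<inter> T = {}" "Tb \<inter> F = {}" using ps_disj[OF p1 Tb(1) cT] ps_disj[OF p1 Tb(1) cF] Tb(2) TbF by auto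
  have memU: "(U,H) \<in> S3" unfolding S3_def by simp
  have memO: "(A,K) \<in> S1 \<Longrightarrow> A \<noteq> T \<Longrightarrow> A \<noteq> F \<Longrightarrow> (A,K) \<in> S3" for A K unfolding S3_def by simp
  have atT: "(A,K) \<in> S1 \<Longrightarrow> A = T \<Longrightarrow> K = H" for A K using ps_uniq[OF p1 _ cT] by blast
  have atF: "(A,K) \<in> S1 \<Longrightarrow> A = F \<Longrightarrow> K = {}" for A K using ps_uniq[OF p1 _ cF] by blast
  have memE: "(A,K) \<in> S3 \<Longrightarrow> (A = U \<and> K = H) \<or> ((A,K) \<in> S1 \<and> A \<noteq> T \<and> A \<noteq> F)" for A K
  proof -
    assume a: "(A,K) \<in> S3"
    then have "(A,K) = (U,H) \<or> ((A,K) \<in> S1 \<and> (A,K) \<noteq> (T,H) \<and> (A,K) \<noteq> (F,{}))"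
      unfolding S3_def by blast
    then show ?thesis
    proof
      assume "(A,K) = (U,H)" then show ?thesis by simp
    next
      assume b: "(A,K) \<in> S1 \<and> (A,K) \<noteq> (T,H) \<and> (A,K) \<noteq> (F,{})"
      then have "A \<noteq> T" using atT by blast
      moreover have "A \<noteq> F" using b atF by blast
      ultimately show ?thesis using b by blast
    qed
  qed
  have meetU: "(A,K) \<in> S1 \<Longrightarrow> A \<inter> U \<noteq> {} \<Longrightarrow> A = T \<or> A = F" for A K
  proof -
    assume a: "(A,K) \<in> S1" "A \<inter> U \<noteq> {}"
    then have "A \<inter> T \<noteq> {} \<or> A \<inter> F \<noteq> {}" unfolding U_def by blast
    then show ?thesis using ps_disj[OF p1 a(1) cT] ps_disj[OF p1 a(1) cF] by blast
  qed
  have Unp: "(U,h) \<notin> S1" for h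
  proof
    assume U1: "(U,h) \<in> S1"
    have "U \<inter> U \<noteq> {}" using Tne unfolding U_def by blast
    then have "U = T \<or> U = F" using meetU[OF U1] by blast
    then show False using TFd Tne Fne unfolding U_def by blast
  qed
  have Une: "U \<noteq> {}" using Tne unfolding U_def by blast
  have UTb: "U \<noteq> Tb" using Tbd Une unfolding U_def by blast
  have hullH3: "(A,H) \<in> S3 \<longleftrightarrow> A = U \<or> A = Tb" for A
  proof
    assume a: "(A,H) \<in> S3"
    show "A = U \<or> A = Tb"
    proof (cases "A = U")
      case False
      then have "(A,H) \<in> S1" "A \<noteq> T" using memE[OF a] by auto
      then show ?thesis using ps_third[OF p1 cT Tb(1) _ Hn] Tb(2) by blast
    qed simp
  next
    assume "A = U \<or> A = Tb"
    then show "(A,H) \<in> S3" using memU memO[OF Tb(1) Tb(2) TbF] by blast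
  qed
  have same: "K \<noteq> {} \<Longrightarrow> K \<noteq> H \<Longrightarrow> (A,K) \<in> S3 \<longleftrightarrow> (A,K) \<in> S1" for A K
  proof -
    assume Kn: "K \<noteq> {}" "K \<noteq> H"
    have "(A,K) \<in> S1 \<Longrightarrow> A \<noteq> T \<and> A \<noteq> F" using atT[of A K] atF[of A K] Kn by blast
    then show ?thesis using memE[of A K] memO[of A K] Kn by blast
  qed
  have hulls3: "hulls S3 = hulls S1"
  proof (rule set_eqI)
    fix K show "K \<in> hulls S3 \<longleftrightarrow> K \<in> hulls S1"
    proof (cases "K = H")
      case True then show ?thesis using memU Hh Hn unfolding hulls_iff by blast
    next
      case False
      show ?thesis using same[of K] False unfolding hulls_iff by blast
    qed
  qed
  have pol: "polestar_system X S3"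
  proof (rule polestarI)
    fix A K assume "(A,K) \<in> S3"
    then consider "A = U" "K = H" | "(A,K) \<in> S1" using memE by blast
    then show "A \<noteq> {} \<and> A \<inter> K = {}"
    proof cases
      case 1 then show ?thesis using Une THd FHd unfolding U_def by blast
    next
      case 2 then show ?thesis using ps_basic[OF p1 2] by blast
    qed
  next
    have "\<Union>(parts S1) = X" using ps_part[OF p1] unfolding is_partition_def by blast
    moreover have "\<Union>(parts S3) = \<Union>(parts S1)"
    proof
      show "\<Union>(parts S3) \<subseteq> \<Union>(parts S1)"
      proof
        fix x assume "x \<in> \<Union>(parts S3)"
        then obtain A K where "(A,K) \<in> S3" "x \<in> A" unfolding parts_def by blast
        then have "(A = U \<and> x \<in> U) \<or> (A,K) \<in> S1" using memE \<open>x \<in> A\<close> by blast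
        then show "x \<in> \<Union>(parts S1)" using cT cF \<open>x \<in> A\<close> unfolding U_def parts_def by blast
      qed
      show "\<Union>(parts S1) \<subseteq> \<Union>(parts S3)"
      proof
        fix x assume "x \<in> \<Union>(parts S1)"
        then obtain A K where AK: "(A,K) \<in> S1" "x \<in> A" unfolding parts_def by blast
        show "x \<in> \<Union>(parts S3)"
        proof (cases "A = T \<or> A = F")
          case True
          then have "x \<in> U" using AK unfolding U_def by blast
          then show ?thesis using memU unfolding parts_def by blast
        next
          case False
          then have "(A,K) \<in> S3" using memO AK by blast
          then show ?thesis using AK unfolding parts_def by blast
        qed
      qed
    qed
    ultimately show "\<Union>(parts S3) = X" by simp
  next
    fix A K B' K' assume a: "(A,K) \<in> S3" "(B',K') \<in> S3" "A \<inter> B' \<noteq> {}"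
    show "A = B' \<and> K = K'"
    proof (cases "A = U \<and> K = H")
      case True
      show ?thesis
      proof (cases "B' = U \<and> K' = H")
        case False
        then have "(B',K') \<in> S1" "B' \<noteq> T" "B' \<noteq> F" using memE[OF a(2)] by auto
        moreover have "B' \<inter> U \<noteq> {}" using a(3) True by blast
        ultimately show ?thesis using meetU by blast
      qed (use True in simp)
    next
      case False
      then have A1: "(A,K) \<in> S1" "A \<noteq> T" "A \<noteq> F" using memE[OF a(1)] by auto
      show ?thesis
      proof (cases "B' = U \<and> K' = H")
        case True
        then have "A \<inter> U \<noteq> {}" using a(3) by blast
        then show ?thesis using meetU A1 by blast
      next
        case False
        then have "(B',K') \<in> S1" using memE[OF a(2)] by auto
        then show ?thesis using ps_disj[OF p1 A1(1) _ a(3)] ps_uniq[OF p1 A1(1)] by blast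
      qed
    qed
  next
    fix A K assume a: "(A,K) \<in> S3" "K \<noteq> {}"
    show "(K,{}) \<in> S3 \<and> (\<exists>B. B \<noteq> A \<and> (B,K) \<in> S3) \<and> (\<forall>B C. (B,K) \<in> S3 \<longrightarrow> (C,K) \<in> S3 \<longrightarrow> B = A \<or> C = A \<or> B = C)"
    proof (cases "K = H")
      case True
      have H3: "(H,{}) \<in> S3" using memO[OF H0 HT HF] .
      have A2: "A = U \<or> A = Tb" using hullH3 a(1) True by blast
      have ex: "\<exists>B. B \<noteq> A \<and> (B,H) \<in> S3" using A2 hullH3 UTb by blast
      have "\<forall>B C. (B,H) \<in> S3 \<longrightarrow> (C,H) \<in> S3 \<longrightarrow> B = A \<or> C = A \<or> B = C"
        using hullH3 A2 by blast
      then show ?thesis using H3 ex True by blast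
    next
      case False
      then have A1: "(A,K) \<in> S1" using same a by blast
      have K0: "(K,{}) \<in> S1" using ps_hull[OF p1 A1 a(2)] .
      have "K \<in> hulls S1" using A1 a(2) unfolding hulls_iff by blast
      then have "K \<noteq> F" using Fh by blast
      moreover have "K \<noteq> T" using atT[OF K0] Hn by blast
      ultimately have "(K,{}) \<in> S3" using memO K0 by blast
      then show ?thesis using d_gen[OF p1 A1 a(2)] same[OF a(2) False] by blast
    qed
  qed
  have TU: "sp_le (T,H) (U,H)"
  proof -
    have "T \<subset> U" using Fne TFd unfolding U_def by blast
    then show ?thesis using Hn unfolding sp_le_simp by blast
  qed
  have UB: "sp_le (U,H) (B,H)"
  proof (cases "U = B")
    case True then show ?thesis using sp_le_refl by simp
  next
    case False
    then have "U \<subset> B" using sub unfolding U_def by blast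
    then show ?thesis using Hn unfolding sp_le_simp by blast
  qed
  have le13: "sps_le S1 S3"
  proof (rule sps_leI)
    fix A K assume AK: "(A,K) \<in> S1"
    show "\<exists>B K'. (B,K') \<in> S3 \<and> sp_le (A,K) (B,K')"
    proof (cases "A = T")
      case True
      then have "K = H" using atT[OF AK] by blast
      then show ?thesis using TU memU True by blast
    next
      case nT: False
      show ?thesis
      proof (cases "A = F")
        case True
        then have "K = {}" using atF[OF AK] by blast
        then have "sp_le (A,K) (U,H)" using True unfolding sp_le_simp U_def by blast
        then show ?thesis using memU by blast
      next
        case False
        then have "(A,K) \<in> S3" using memO AK nT by blast
        then show ?thesis using sp_le_refl by blast
      qed
    qed
  next
    fix B' K assume a: "(B',K) \<in> S3" "K \<noteq> {}"
    show "\<exists>A. (A,K) \<in> S1 \<and> sp_le (A,K) (B',K)"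
    proof (cases "B' = U \<and> K = H")
      case True then show ?thesis using cT TU by blast
    next
      case False
      then have "(B',K) \<in> S1" using memE[OF a(1)] by auto
      then show ?thesis using sp_le_refl by blast
    qed
  qed
  have le32: "sps_le S3 S2"
  proof (rule sps_leI)
    fix A K assume AK: "(A,K) \<in> S3"
    show "\<exists>B' K'. (B',K') \<in> S2 \<and> sp_le (A,K) (B',K')"
    proof (cases "A = U \<and> K = H")
      case True
      then show ?thesis using UB BH by blast
    next
      case False
      then have "(A,K) \<in> S1" using memE[OF AK] by auto
      then show ?thesis using SP1 by blast
    qed
  next
    fix B' K' assume BK: "(B',K') \<in> S2" "K' \<noteq> {}" "\<exists>A. (A,K') \<in> S3"
    then have "K' \<in> hulls S3" unfolding hulls_iff by blast
    then have "K' \<in> hulls S1" using hulls3 by simp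
    then obtain A' where A': "(A',K') \<in> S1" "sp_le (A',K') (B',K')" using SP2'[OF BK(1,2)] by blast
    show "\<exists>A. (A,K') \<in> S3 \<and> sp_le (A,K') (B',K')"
    proof (cases "A' = T")
      case False
      have "A' \<noteq> F" using atF[OF A'(1)] BK(2) by blast
      then have "(A',K') \<in> S3" using memO[OF A'(1) False] by blast
      then show ?thesis using A'(2) by blast
    next
      case True
      then have KH: "K' = H" using atT[OF A'(1)] by blast
      have "T \<union> H \<subseteq> H \<Longrightarrow> False" using THd Tne by blast
      then have "T \<subseteq> B'" using A'(2) True KH unfolding sp_le_simp by blast
      then have "B' \<inter> B \<noteq> {}" using sub Tne by blast
      then have "B' = B" using ps_disj[OF p2 BK(1) BH] by blast
      then show ?thesis using UB memU KH by blast
    qed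
  qed
  have nh3: "nh S3 = insert U (nh S1 - {T,F})"
  proof
    show "nh S3 \<subseteq> insert U (nh S1 - {T,F})"
    proof
      fix A assume "A \<in> nh S3"
      then obtain K where AK: "(A,K) \<in> S3" "A \<notin> hulls S3" unfolding nh_iff by blast
      show "A \<in> insert U (nh S1 - {T,F})"
      proof (cases "A = U \<and> K = H")
        case False
        then have A1: "(A,K) \<in> S1" "A \<noteq> T" "A \<noteq> F" using memE[OF AK(1)] by auto
        then have "A \<notin> hulls S1" using AK(2) hulls3 by blast
        then have "A \<in> nh S1" using A1(1) unfolding nh_iff by blast
        then show ?thesis using A1 by blast
      qed simp
    qed
    show "insert U (nh S1 - {T,F}) \<subseteq> nh S3"
    proof
      fix A assume A: "A \<in> insert U (nh S1 - {T,F})"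
      show "A \<in> nh S3"
      proof (cases "A = U")
        case True
        have "U \<notin> parts S1" using Unp unfolding parts_iff by blast
        then have "U \<notin> hulls S1" using hulls_sub[OF p1] by blast
        then have "U \<notin> hulls S3" using hulls3 by simp
        then show ?thesis using True memU unfolding nh_iff by blast
      next
        case False
        then have "A \<in> nh S1" "A \<noteq> T" "A \<noteq> F" using A by auto
        then obtain K where AK: "(A,K) \<in> S1" "A \<notin> hulls S1" "A \<noteq> T" "A \<noteq> F" unfolding nh_iff by blast
        then have "(A,K) \<in> S3" "A \<notin> hulls S3" using memO AK hulls3 by auto
        then show ?thesis unfolding nh_iff by blast
      qed
    qed
  qed
  have fin: "finite (nh S1)" using nh_fin[OF p1 fX] .
  have "U \<notin> nh S1" using Unp unfolding nh_iff by blast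
  then have "U \<notin> nh S1 - {T,F}" by blast
  then have "card (nh S3) = card (nh S1 - {T,F}) + 1" unfolding nh3 using fin by simp
  moreover have "T \<in> nh S1" "F \<in> nh S1" using cT cF ps_memb[OF p1 cT Hn] Fh unfolding nh_iff by auto
  then have "card (nh S1 - {T,F}) + 2 = card (nh S1)" using card_minus2[OF fin _ _ TF] by blast
  ultimately have "card (nh S3) + 1 = card (nh S1)" by linarith
  then show ?thesis using pol le13 le32 by blast
qed

end


context two begin
lemma exists3: assumes fX: "finite X" and ne: "S1 \<noteq> S2"
  shows "\<exists>S3. polestar_system X S3 \<and> sps_le S1 S3 \<and> sps_le S3 S2 \<and> card (nh S3) + 1 = card (nh S1)"
proof -
  consider "C1 S1 S2" | "C2 S1 S2" | "C3 S1 S2" | "C4 S1 S2" using cases4[OF ne] by blast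
  then show ?thesis
  proof cases
    case 1 then show ?thesis unfolding C1_def using constr1[OF fX] by blast
  next
    case 2 then show ?thesis unfolding C2_def using constr2[OF fX] by blast
  next
    case 3 then show ?thesis unfolding C3_def using constr3[OF fX] by blast
  next
    case 4 then show ?thesis unfolding C4_def using constr4[OF fX] by blast
  qed
qed
end

theorem mainTheorem7:
  fixes X :: "'a set" and \<S>1 \<S>2 :: "'a set_pair set"
  assumes "finite X" and "X \<noteq> {}"
    and "\<S>1 \<in> polestar_systems X" and "\<S>2 \<in> polestar_systems X"
    and "sps_less \<S>1 \<S>2"
  shows "1 \<le> int (card (parts \<S>2)) - int (card (hulls \<S>2))
      \<and> int (card (parts \<S>2)) - int (card (hulls \<S>2))
          < int (card (parts \<S>1)) - int (card (hulls \<S>1))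
      \<and> int (card (parts \<S>1)) - int (card (hulls \<S>1)) \<le> int (card X)
      \<and> ((int (card (parts \<S>1)) - int (card (hulls \<S>1)))
           - (int (card (parts \<S>2)) - int (card (hulls \<S>2))) \<ge> 2
         \<longrightarrow> (\<exists>\<S>3 \<in> polestar_systems X. sps_less \<S>1 \<S>3 \<and> sps_less \<S>3 \<S>2))"
proof -
  have p1: "polestar_system X \<S>1" using assms(3) unfolding polestar_systems_def by simp
  have p2: "polestar_system X \<S>2" using assms(4) unfolding polestar_systems_def by simp
  have le: "sps_le \<S>1 \<S>2" and ne: "\<S>1 \<noteq> \<S>2" using assms(5) unfolding sps_less_def by auto
  interpret two X \<S>1 \<S>2 using p1 p2 le by (unfold_locales)
  have r1: "int (card (parts \<S>1)) - int (card (hulls \<S>1)) = int (card (nh \<S>1))" using rank_eq[OF p1 assms(1)] .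
  have r2: "int (card (parts \<S>2)) - int (card (hulls \<S>2)) = int (card (nh \<S>2))" using rank_eq[OF p2 assms(1)] .
  have a: "1 \<le> card (nh \<S>2)" using nh_pos[OF p2 assms(1,2)] .
  have b: "card (nh \<S>2) < card (nh \<S>1)" using strict[OF assms(1) ne] .
  have c: "card (nh \<S>1) \<le> card X" using nh_le_X[OF p1 assms(1)] .
  have d: "int (card (nh \<S>1)) - int (card (nh \<S>2)) \<ge> 2 \<longrightarrow> (\<exists>\<S>3 \<in> polestar_systems X. sps_less \<S>1 \<S>3 \<and> sps_less \<S>3 \<S>2)"
  proof
    assume gap: "int (card (nh \<S>1)) - int (card (nh \<S>2)) \<ge> 2"
    obtain S3 where S3: "polestar_system X S3" "sps_le \<S>1 S3" "sps_le S3 \<S>2" "card (nh S3) + 1 = card (nh \<S>1)"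
      using exists3[OF assms(1) ne] by blast
    have "S3 \<noteq> \<S>1" using S3(4) by auto
    moreover have "S3 \<noteq> \<S>2" using S3(4) gap by auto
    ultimately show "\<exists>\<S>3 \<in> polestar_systems X. sps_less \<S>1 \<S>3 \<and> sps_less \<S>3 \<S>2"
      using S3 unfolding polestar_systems_def sps_less_def by auto
  qed
  show ?thesis unfolding r1 r2 using a b c d by linarith
qed


end
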